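(* Let $E$ be an Archimedean vector lattice and let $T:E\to S(X)$ be Wickstead's representation of $E$, namely: $(B_\alpha)_{\alpha}$ is a family of pairwise disjoint bands of $E$, each $B_\alpha$ having a weak unit $x_\alpha$, such that every $x\in E$ is written as $x=\bigvee_\alpha y_\alpha$ with $y_\alpha\in B_\alpha$; for each $\alpha$, $X_\alpha$ is a compact Hausdorff space and $T_\alpha:B_\alpha\to S(X_\alpha)$ is an injective lattice homomorphism with $T_\alpha(x_\alpha)=\mathbf{1}_{X_\alpha}$ and the supremum-norm closure of $T_\alpha$ of the ideal generated by $x_\alpha$ in $B_\alpha$ equal to $C(X_\alpha)$; $X=\bigsqcup_\alpha X_\alpha$ is the disjoint union; and $T(x)=(T_\alpha(y_\alpha))_\alpha$ under the identification $S(X)=\prod_\alpha S(X_\alpha)$. Then $T$ is order continuous and $uo$-continuous, and $T^{-1}:T(E)\to E$ is $uo$-continuous (if $T(x_\beta)\xrightarrow{uo}T(x)$ in $S(X)$ then $x_\beta\xrightarrow{uo}x$ in $E$).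
   Context: For a topological space $X$, $S(X)$ is the Archimedean vector lattice of equivalence classes of continuous real-valued functions defined on open dense subsets of $X$ (two functions identified if they agree on the intersection of their domains), with pointwise operations; $\mathbf{1}_X$ is the constant function $1$. For a disjoint union $X=\bigsqcup_\alpha X_\alpha$ of topological spaces, $S(X)$ is identified (as ordered vector space, componentwise order) with $\prod_\alpha S(X_\alpha)$. A net $(x_\alpha)$ in a vector lattice converges in order to $x$ if there is a net $u_\gamma\downarrow0$ such that for each $\gamma$ there is $\alpha_0$ with $|x_\alpha-x|\le u_\gamma$ for $\alpha\ge\alpha_0$; it is $uo$-convergent to $x$ if $|x_\alpha-x|\wedge w\to 0$ in order for every positive $w$. An operator is order continuous if it maps order null nets to order null nets. *)

theory Defs
  imports "HOL-Analysis.Analysis"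
begin

definition vabs :: "'e::{ordered_real_vector,lattice} \<Rightarrow> 'e" where
  "vabs x = sup x (- x)"

definition vpos :: "'e::{ordered_real_vector,lattice} \<Rightarrow> 'e" where
  "vpos x = sup x 0"

definition vneg :: "'e::{ordered_real_vector,lattice} \<Rightarrow> 'e" where
  "vneg x = sup (- x) 0"

definition archimedean_vl :: "'e::{ordered_real_vector,lattice} itself \<Rightarrow> bool" where
  "archimedean_vl _ \<longleftrightarrow>
     (\<forall>x y::'e. 0 \<le> x \<longrightarrow> (\<forall>n::nat. real n *\<^sub>R x \<le> y) \<longrightarrow> x = 0)"

definition is_sup_of :: "'e::{ordered_real_vector,lattice} set \<Rightarrow> 'e \<Rightarrow> bool" where
  "is_sup_of A s \<longleftrightarrow> (\<forall>a\<in>A. a \<le> s) \<and> (\<forall>t. (\<forall>a\<in>A. a \<le> t) \<longrightarrow> s \<le> t)"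

definition vdisjoint :: "'e::{ordered_real_vector,lattice} \<Rightarrow> 'e \<Rightarrow> bool" where
  "vdisjoint x y \<longleftrightarrow> inf (vabs x) (vabs y) = 0"

definition is_ideal :: "'e::{ordered_real_vector,lattice} set \<Rightarrow> bool" where
  "is_ideal B \<longleftrightarrow> 0 \<in> B \<and> (\<forall>a\<in>B. \<forall>b\<in>B. a + b \<in> B) \<and> (\<forall>c. \<forall>a\<in>B. c *\<^sub>R a \<in> B)
     \<and> (\<forall>a\<in>B. \<forall>y. vabs y \<le> vabs a \<longrightarrow> y \<in> B)"

definition is_band :: "'e::{ordered_real_vector,lattice} set \<Rightarrow> bool" where
  "is_band B \<longleftrightarrow> is_ideal B \<and> (\<forall>A s. A \<subseteq> B \<longrightarrow> is_sup_of A s \<longrightarrow> s \<in> B)"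

definition weak_unit_of :: "'e::{ordered_real_vector,lattice} set \<Rightarrow> 'e \<Rightarrow> bool" where
  "weak_unit_of B e \<longleftrightarrow> e \<in> B \<and> 0 \<le> e \<and> (\<forall>y\<in>B. inf (vabs y) e = 0 \<longrightarrow> y = 0)"

definition principal_ideal_in :: "'e::{ordered_real_vector,lattice} set \<Rightarrow> 'e \<Rightarrow> 'e set" where
  "principal_ideal_in B e = {y\<in>B. \<exists>n::nat. vabs y \<le> real n *\<^sub>R e}"

definition directed_set :: "'b set \<Rightarrow> ('b \<Rightarrow> 'b \<Rightarrow> bool) \<Rightarrow> bool" where
  "directed_set J r \<longleftrightarrow> J \<noteq> {} \<and> (\<forall>a\<in>J. r a a)
     \<and> (\<forall>a\<in>J. \<forall>b\<in>J. \<forall>c\<in>J. r a b \<longrightarrow> r b c \<longrightarrow> r a c)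
     \<and> (\<forall>a\<in>J. \<forall>b\<in>J. \<exists>c\<in>J. r a c \<and> r b c)"

definition evtl :: "'b set \<Rightarrow> ('b \<Rightarrow> 'b \<Rightarrow> bool) \<Rightarrow> ('b \<Rightarrow> bool) \<Rightarrow> bool" where
  "evtl J r P \<longleftrightarrow> (\<exists>b0\<in>J. \<forall>b\<in>J. r b0 b \<longrightarrow> P b)"

text \<open>The dominating net u_gamma decreasing to 0
  is represented by its (downward directed) range D, whose infimum is 0.\<close>
definition oconv_gen ::
  "'v set \<Rightarrow> ('v \<Rightarrow> 'v \<Rightarrow> bool) \<Rightarrow> 'v \<Rightarrow> ('v \<Rightarrow> 'v \<Rightarrow> 'v)
    \<Rightarrow> 'b set \<Rightarrow> ('b \<Rightarrow> 'b \<Rightarrow> bool) \<Rightarrow> ('b \<Rightarrow> 'v) \<Rightarrow> 'v \<Rightarrow> bool" where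
  "oconv_gen C le z dst J r x l \<longleftrightarrow>
     (\<exists>D. D \<subseteq> C \<and> D \<noteq> {} \<and> (\<forall>d\<in>D. le z d)
        \<and> (\<forall>a\<in>D. \<forall>b\<in>D. \<exists>c\<in>D. le c a \<and> le c b)
        \<and> (\<forall>w\<in>C. (\<forall>d\<in>D. le w d) \<longrightarrow> le w z)
        \<and> (\<forall>d\<in>D. evtl J r (\<lambda>\<beta>. le (dst (x \<beta>) l) d)))"

definition uoconv_gen ::
  "'v set \<Rightarrow> ('v \<Rightarrow> 'v \<Rightarrow> bool) \<Rightarrow> 'v \<Rightarrow> ('v \<Rightarrow> 'v \<Rightarrow> 'v) \<Rightarrow> ('v \<Rightarrow> 'v \<Rightarrow> 'v)
    \<Rightarrow> 'b set \<Rightarrow> ('b \<Rightarrow> 'b \<Rightarrow> bool) \<Rightarrow> ('b \<Rightarrow> 'v) \<Rightarrow> 'v \<Rightarrow> bool" where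
  "uoconv_gen C le z dst mn J r x l \<longleftrightarrow>
     (\<forall>w\<in>C. le z w \<longrightarrow> oconv_gen C le z dst J r (\<lambda>\<beta>. mn (dst (x \<beta>) l) w) z)"

definition oconvE :: "'b set \<Rightarrow> ('b \<Rightarrow> 'b \<Rightarrow> bool) \<Rightarrow> ('b \<Rightarrow> 'e::{ordered_real_vector,lattice}) \<Rightarrow> 'e \<Rightarrow> bool" where
  "oconvE J r x l = oconv_gen UNIV (\<le>) 0 (\<lambda>a b. vabs (a - b)) J r x l"

definition uoconvE :: "'b set \<Rightarrow> ('b \<Rightarrow> 'b \<Rightarrow> bool) \<Rightarrow> ('b \<Rightarrow> 'e::{ordered_real_vector,lattice}) \<Rightarrow> 'e \<Rightarrow> bool" where
  "uoconvE J r x l = uoconv_gen UNIV (\<le>) 0 (\<lambda>a b. vabs (a - b)) inf J r x l"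

text \<open>Representatives of elements of S(X): pairs (U,f) with U open dense in X and f continuous
  on U.  Two representatives are identified (sequiv) iff they agree on the intersection of the
  domains; the order and the operations are pointwise on the intersection of the domains.\<close>
type_synonym 'x srep = "'x set \<times> ('x \<Rightarrow> real)"

definition Srep :: "'x topology \<Rightarrow> 'x srep set" where
  "Srep X = {(U, f). openin X U \<and> X closure_of U = topspace X
                      \<and> continuous_map (subtopology X U) euclideanreal f}"

definition sequiv :: "'x srep \<Rightarrow> 'x srep \<Rightarrow> bool" where
  "sequiv p q \<longleftrightarrow> (\<forall>t\<in>fst p \<inter> fst q. snd p t = snd q t)"

definition sle :: "'x srep \<Rightarrow> 'x srep \<Rightarrow> bool" where
  "sle p q \<longleftrightarrow> (\<forall>t\<in>fst p \<inter> fst q. snd p t \<le> snd q t)"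

definition szero :: "'x topology \<Rightarrow> 'x srep" where
  "szero X = (topspace X, \<lambda>_. 0)"

definition sone :: "'x topology \<Rightarrow> 'x srep" where
  "sone X = (topspace X, \<lambda>_. 1)"

definition splus :: "'x srep \<Rightarrow> 'x srep \<Rightarrow> 'x srep" where
  "splus p q = (fst p \<inter> fst q, \<lambda>t. snd p t + snd q t)"

definition sminus :: "'x srep \<Rightarrow> 'x srep \<Rightarrow> 'x srep" where
  "sminus p q = (fst p \<inter> fst q, \<lambda>t. snd p t - snd q t)"

definition sscale :: "real \<Rightarrow> 'x srep \<Rightarrow> 'x srep" where
  "sscale c p = (fst p, \<lambda>t. c * snd p t)"

definition ssup :: "'x srep \<Rightarrow> 'x srep \<Rightarrow> 'x srep" where
  "ssup p q = (fst p \<inter> fst q, \<lambda>t. max (snd p t) (snd q t))"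

definition sinf :: "'x srep \<Rightarrow> 'x srep \<Rightarrow> 'x srep" where
  "sinf p q = (fst p \<inter> fst q, \<lambda>t. min (snd p t) (snd q t))"

definition sabs :: "'x srep \<Rightarrow> 'x srep" where
  "sabs p = (fst p, \<lambda>t. \<bar>snd p t\<bar>)"

definition oconvS :: "'x topology \<Rightarrow> 'b set \<Rightarrow> ('b \<Rightarrow> 'b \<Rightarrow> bool) \<Rightarrow> ('b \<Rightarrow> 'x srep) \<Rightarrow> 'x srep \<Rightarrow> bool" where
  "oconvS X J r x l = oconv_gen (Srep X) sle (szero X) (\<lambda>p q. sabs (sminus p q)) J r x l"

definition uoconvS :: "'x topology \<Rightarrow> 'b set \<Rightarrow> ('b \<Rightarrow> 'b \<Rightarrow> bool) \<Rightarrow> ('b \<Rightarrow> 'x srep) \<Rightarrow> 'x srep \<Rightarrow> bool" where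
  "uoconvS X J r x l = uoconv_gen (Srep X) sle (szero X) (\<lambda>p q. sabs (sminus p q)) sinf J r x l"

definition inj_lattice_hom_S ::
  "'e::{ordered_real_vector,lattice} set \<Rightarrow> 'x topology \<Rightarrow> ('e \<Rightarrow> 'x srep) \<Rightarrow> bool" where
  "inj_lattice_hom_S B Y F \<longleftrightarrow>
     (\<forall>a\<in>B. F a \<in> Srep Y)
   \<and> (\<forall>a\<in>B. \<forall>b\<in>B. sequiv (F (a + b)) (splus (F a) (F b)))
   \<and> (\<forall>c. \<forall>a\<in>B. sequiv (F (c *\<^sub>R a)) (sscale c (F a)))
   \<and> (\<forall>a\<in>B. \<forall>b\<in>B. sequiv (F (sup a b)) (ssup (F a) (F b)))
   \<and> (\<forall>a\<in>B. \<forall>b\<in>B. sequiv (F (inf a b)) (sinf (F a) (F b)))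
   \<and> (\<forall>a\<in>B. \<forall>b\<in>B. sequiv (F a) (F b) \<longrightarrow> a = b)"

text \<open>C(Y) inside S(Y): representatives (topspace Y, g) with g continuous on Y.
  The sup-norm closure of F(I) equals C(Y): F(I) is contained in C(Y) and is uniformly dense.\<close>
definition supnorm_closure_is_C ::
  "'x topology \<Rightarrow> ('e \<Rightarrow> 'x srep) \<Rightarrow> 'e set \<Rightarrow> bool" where
  "supnorm_closure_is_C Y F I \<longleftrightarrow>
     (\<forall>y\<in>I. \<exists>g. continuous_map Y euclideanreal g \<and> sequiv (F y) (topspace Y, g))
   \<and> (\<forall>g. continuous_map Y euclideanreal g \<longrightarrow> (\<forall>\<epsilon>>0. \<exists>y\<in>I. \<exists>h.
          continuous_map Y euclideanreal h \<and> sequiv (F y) (topspace Y, h)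
          \<and> (\<forall>t\<in>topspace Y. \<bar>g t - h t\<bar> \<le> \<epsilon>)))"

text \<open>Restriction of an element of S(disjoint union) to the component alpha (the identification
  S(X) = prod_alpha S(X_alpha)).\<close>
definition sslice :: "'i \<Rightarrow> ('i \<times> 'x) srep \<Rightarrow> 'x srep" where
  "sslice \<alpha> p = ({t. (\<alpha>, t) \<in> fst p}, \<lambda>t. snd p (\<alpha>, t))"

text \<open>y is the decomposition of x along the bands: y_alpha in B_alpha and
  x = sup_alpha y_alpha, read for positive and negative parts separately.\<close>
definition band_decomp ::
  "'i set \<Rightarrow> ('i \<Rightarrow> 'e::{ordered_real_vector,lattice} set) \<Rightarrow> 'e \<Rightarrow> ('i \<Rightarrow> 'e) \<Rightarrow> bool" where
  "band_decomp I B x y \<longleftrightarrow> (\<forall>\<alpha>\<in>I. y \<alpha> \<in> B \<alpha>)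
     \<and> is_sup_of ((\<lambda>\<alpha>. vpos (y \<alpha>)) ` I) (vpos x)
     \<and> is_sup_of ((\<lambda>\<alpha>. vneg (y \<alpha>)) ` I) (vneg x)"

end

theory Submission
  imports Defs "HOL-Library.Lattice_Algebras"
begin

lemma LAG: "class.lattice_ab_group_add (+) (0::'e::{ordered_real_vector,lattice}) (-) uminus (\<le>) (<) inf sup"
  by unfold_locales

lemmas E_add_eq_inf_sup = lattice_ab_group_add.add_eq_inf_sup[OF LAG]
lemma SIG: "class.semilattice_inf_ab_group_add (+) (0::'e::{ordered_real_vector,lattice}) (-) uminus (\<le>) (<) inf"
  by unfold_locales
lemma SSG: "class.semilattice_sup_ab_group_add (+) (0::'e::{ordered_real_vector,lattice}) (-) uminus (\<le>) (<) sup"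
  by unfold_locales
lemma E_add_inf_left: "(a::'e::{ordered_real_vector,lattice}) + inf b c = inf (a + b) (a + c)"
  by (rule semilattice_inf_ab_group_add.add_inf_distrib_left[OF SIG])
lemma E_add_sup_left: "(a::'e::{ordered_real_vector,lattice}) + sup b c = sup (a + b) (a + c)"
  by (rule semilattice_sup_ab_group_add.add_sup_distrib_left[OF SSG])
lemmas E_neg_sup = lattice_ab_group_add.neg_sup_eq_inf[OF LAG]
lemmas E_neg_inf = lattice_ab_group_add.neg_inf_eq_sup[OF LAG]
lemmas E_dbl = lattice_ab_group_add.zero_le_double_add_iff_zero_le_single_add[OF LAG]


lemma vpos_ge0: "0 \<le> vpos x" by (simp add: vpos_def)
lemma vneg_ge0: "0 \<le> vneg x" by (simp add: vneg_def)
lemma vpos_ge: "x \<le> vpos x" by (simp add: vpos_def)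
lemma vneg_ge: "- x \<le> vneg x" by (simp add: vneg_def)

lemma vabs_ge0: "0 \<le> vabs x"
proof -
  have "0 \<le> vabs x + vabs x"
  proof -
    have "x + - x \<le> vabs x + vabs x" unfolding vabs_def by (intro add_mono) auto
    then show ?thesis by simp
  qed
  then show ?thesis using E_dbl by blast
qed

lemma vpos_minus_vneg: "vpos x - vneg x = x"
proof -
  have "vneg x = - inf x 0" unfolding vneg_def using E_neg_inf[of x 0] by simp
  then have "vpos x - vneg x = sup x 0 + inf x 0" by (simp add: vpos_def)
  also have "\<dots> = x + 0" using E_add_eq_inf_sup[of x 0] by simp
  finally show ?thesis by simp
qed

lemma inf_vpos_vneg: "inf (vpos x) (vneg x) = 0"
proof -
  have "inf (vpos x) (vneg x) = vpos x + inf 0 (vneg x - vpos x)"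
    using E_add_inf_left[of "vpos x" 0 "vneg x - vpos x"] by simp
  also have "vneg x - vpos x = - x" using vpos_minus_vneg[of x] by (metis minus_diff_eq)
  also have "inf 0 (- x) = - sup 0 x" using E_neg_sup[of 0 x] by simp
  also have "vpos x + - sup 0 x = 0" by (simp add: vpos_def sup_commute)
  finally show ?thesis .
qed

lemma vabs_eq: "vabs x = vpos x + vneg x"
proof -
  have "vpos x + vneg x = sup (vpos x) (vneg x) + inf (vpos x) (vneg x)" by (rule E_add_eq_inf_sup)
  also have "\<dots> = sup (vpos x) (vneg x)" by (simp add: inf_vpos_vneg)
  also have "\<dots> = sup (vabs x) 0" unfolding vpos_def vneg_def vabs_def by (simp add: sup_aci)
  also have "\<dots> = vabs x" using vabs_ge0[of x] by (simp add: sup_absorb1)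
  finally show ?thesis by simp
qed

lemma vpos_le_vabs: "vpos x \<le> vabs x" using vabs_eq[of x] vneg_ge0[of x] by (metis add_increasing2 order_refl)
lemma vneg_le_vabs: "vneg x \<le> vabs x" using vabs_eq[of x] vpos_ge0[of x] by (metis add_increasing order_refl)
lemma le_vabs: "x \<le> vabs x" by (simp add: vabs_def)
lemma neg_le_vabs: "- x \<le> vabs x" by (simp add: vabs_def)
lemma vabs_le_iff: "vabs x \<le> a \<longleftrightarrow> x \<le> a \<and> - x \<le> a" by (simp add: vabs_def)

lemma vabs_zero_iff: "vabs x = 0 \<longleftrightarrow> x = 0"
proof
  assume h: "vabs x = 0"
  then have "vpos x = 0" using vpos_le_vabs[of x] vpos_ge0[of x] by simp
  moreover have "vneg x = 0" using h vneg_le_vabs[of x] vneg_ge0[of x] by simp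
  ultimately show "x = 0" using vpos_minus_vneg[of x] by simp
qed (simp add: vabs_def)

lemma vpos_of_nonneg: "0 \<le> x \<Longrightarrow> vpos x = x" by (simp add: vpos_def sup_absorb1)
lemma vneg_of_nonneg: "0 \<le> x \<Longrightarrow> vneg x = 0" by (simp add: vneg_def sup_absorb2)
lemma vabs_of_nonneg: "0 \<le> x \<Longrightarrow> vabs x = x" by (simp add: vabs_eq vpos_of_nonneg vneg_of_nonneg)
lemma vpos_uminus: "vpos (- x) = vneg x" by (simp add: vpos_def vneg_def)
lemma vneg_uminus: "vneg (- x) = vpos x" by (simp add: vpos_def vneg_def)
lemma vabs_uminus: "vabs (- x) = vabs x" by (simp add: vabs_def sup_commute)
lemma vabs_vpos: "vabs (vpos x) = vpos x" by (simp add: vabs_of_nonneg vpos_ge0)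
lemma vabs_vneg: "vabs (vneg x) = vneg x" by (simp add: vabs_of_nonneg vneg_ge0)
lemma vabs_vabs: "vabs (vabs x) = vabs x" by (simp add: vabs_of_nonneg vabs_ge0)
lemma vpos_vpos: "vpos (vpos x) = vpos x" by (simp add: vpos_of_nonneg vpos_ge0)
lemma vneg_vpos: "vneg (vpos x) = 0" by (simp add: vneg_of_nonneg vpos_ge0)

lemma nonneg_iff_vneg: "0 \<le> x \<longleftrightarrow> vneg x = 0"
  using vpos_minus_vneg[of x] vpos_ge0[of x] vneg_of_nonneg[of x] by (metis diff_zero)

lemma vpos_mono: "x \<le> y \<Longrightarrow> vpos x \<le> vpos y" unfolding vpos_def by (meson order_refl sup_mono)
lemma vneg_antimono: "x \<le> y \<Longrightarrow> vneg y \<le> vneg x" unfolding vneg_def by (simp add: le_supI1)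

lemma vabs_triangle: "vabs (a + b) \<le> vabs a + vabs b"
  unfolding vabs_le_iff
  by (metis add_mono le_vabs neg_le_vabs minus_add_distrib add.commute)

lemma riesz_ineq:
  fixes a b c :: "'e::{ordered_real_vector,lattice}"
  assumes "0 \<le> a" "0 \<le> b" "0 \<le> c"
  shows "inf (a + b) c \<le> inf a c + inf b c"
proof -
  have "inf a c + inf b c = inf (inf a c + b) (inf a c + c)"
    using E_add_inf_left[of "inf a c" b c] by simp
  also have "inf a c + b = inf (a + b) (c + b)" by (metis E_add_inf_left add.commute)
  also have "inf a c + c = inf (a + c) (c + c)" by (metis E_add_inf_left add.commute)
  finally have e: "inf a c + inf b c = inf (inf (a + b) (c + b)) (inf (a + c) (c + c))" .
  have "inf (a + b) c \<le> inf (inf (a + b) (c + b)) (inf (a + c) (c + c))"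
    using assms by (auto intro: le_infI1 le_infI2 add_increasing add_increasing2)
  then show ?thesis using e by simp
qed

lemma inf_sup_dist:
  assumes "is_sup_of A s"
  shows "is_sup_of ((\<lambda>a. inf z a) ` A) (inf z s)"
  unfolding is_sup_of_def
proof safe
  fix a assume "a \<in> A" then show "inf z a \<le> inf z s" using assms unfolding is_sup_of_def
    by (meson inf_mono order_refl)
next
  fix t assume ub: "\<forall>v\<in>(\<lambda>a. inf z a) ` A. v \<le> t"
  have "\<forall>a\<in>A. a \<le> t + sup z s - z"
  proof
    fix a assume aA: "a \<in> A"
    have "a = inf z a + sup z a - z" using E_add_eq_inf_sup[of z a] by (simp add: algebra_simps)
    also have "\<dots> \<le> t + sup z s - z" using ub aA assms unfolding is_sup_of_def
      by (intro diff_right_mono add_mono) (auto intro: le_supI2)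
    finally show "a \<le> t + sup z s - z" .
  qed
  then have "s \<le> t + sup z s - z" using assms unfolding is_sup_of_def by blast
  then have "z + s - sup z s \<le> t" by (simp add: algebra_simps)
  moreover have "inf z s = z + s - sup z s" using E_add_eq_inf_sup[of z s] by (simp add: algebra_simps)
  ultimately show "inf z s \<le> t" by simp
qed

lemma is_sup_unique: "is_sup_of A s \<Longrightarrow> is_sup_of A t \<Longrightarrow> s = t"
  unfolding is_sup_of_def by (meson order_antisym)

definition dopen :: "'x topology \<Rightarrow> 'x set \<Rightarrow> bool" where
  "dopen Y U \<longleftrightarrow> openin Y U \<and> Y closure_of U = topspace Y"

lemma dopen_Int:
  assumes "dopen Y U" "dopen Y V" shows "dopen Y (U \<inter> V)"
proof -
  have oU: "openin Y U" and dU: "Y closure_of U = topspace Y" and oV: "openin Y V"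
    and dV: "Y closure_of V = topspace Y" using assms unfolding dopen_def by auto
  have "Y closure_of (U \<inter> V) = topspace Y" unfolding dense_intersects_open
  proof (intro allI impI)
    fix T assume T: "openin Y T \<and> T \<noteq> {}"
    have "openin Y (U \<inter> T)" using oU T by blast
    moreover have "U \<inter> T \<noteq> {}" using dU T unfolding dense_intersects_open by blast
    ultimately have "V \<inter> (U \<inter> T) \<noteq> {}" using dV unfolding dense_intersects_open by blast
    then show "U \<inter> V \<inter> T \<noteq> {}" by blast
  qed
  then show ?thesis using oU oV unfolding dopen_def by blast
qed

lemma dopen_topspace: "dopen Y (topspace Y)"
  unfolding dopen_def by simp

lemma dopen_meets: "dopen Y V \<Longrightarrow> openin Y W \<Longrightarrow> W \<noteq> {} \<Longrightarrow> \<exists>s\<in>W. s \<in> V"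
  unfolding dopen_def dense_intersects_open by blast

lemma openin_pos_set:
  assumes "openin Y U" "continuous_map (subtopology Y U) euclideanreal F"
  shows "openin Y {s \<in> U. 0 < F s}"
proof -
  have "openin (subtopology Y U) {s \<in> topspace (subtopology Y U). F s \<in> {0<..}}"
    by (rule openin_continuous_map_preimage[OF assms(2)]) auto
  moreover have "{s \<in> topspace (subtopology Y U). F s \<in> {0<..}} = {s \<in> U. 0 < F s}"
    using openin_subset[OF assms(1)] by auto
  ultimately show ?thesis using assms(1) openin_trans_full by metis
qed

lemma ineq_extend:
  assumes "openin Y U" "continuous_map (subtopology Y U) euclideanreal F"
    "continuous_map (subtopology Y U) euclideanreal G" "dopen Y V"
    "\<forall>s\<in>U \<inter> V. F s \<le> G s" "t \<in> U"
  shows "F t \<le> G t"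
proof (rule ccontr)
  assume "\<not> F t \<le> G t"
  have c: "continuous_map (subtopology Y U) euclideanreal (\<lambda>s. F s - G s)"
    using assms by (intro continuous_map_diff) auto
  have "openin Y {s \<in> U. 0 < F s - G s}" by (rule openin_pos_set[OF assms(1) c])
  moreover have "t \<in> {s \<in> U. 0 < F s - G s}" using \<open>\<not> F t \<le> G t\<close> assms(6) by auto
  ultimately obtain s where s1: "s \<in> {s \<in> U. 0 < F s - G s}" and s2: "s \<in> V"
    using dopen_meets[OF assms(4)] by blast
  have "s \<in> U \<inter> V" using s1 s2 by blast
  then have "F s \<le> G s" using assms(5) by blast
  then show False using s1 by simp
qed

lemma Srep_D:
  assumes "p \<in> Srep Y"
  shows "dopen Y (fst p)" "continuous_map (subtopology Y (fst p)) euclideanreal (snd p)"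
    "openin Y (fst p)" "fst p \<subseteq> topspace Y"
proof -
  obtain U f where p: "p = (U, f)" by (cases p)
  have h: "openin Y U" "Y closure_of U = topspace Y" "continuous_map (subtopology Y U) euclideanreal f"
    using assms unfolding p Srep_def by auto
  show "dopen Y (fst p)" using h unfolding p dopen_def by simp
  show "continuous_map (subtopology Y (fst p)) euclideanreal (snd p)" using h unfolding p by simp
  show "openin Y (fst p)" using h unfolding p by simp
  show "fst p \<subseteq> topspace Y" using h(1) openin_subset unfolding p by simp
qed

lemma Srep_I:
  "dopen Y U \<Longrightarrow> continuous_map (subtopology Y U) euclideanreal f \<Longrightarrow> (U, f) \<in> Srep Y"
  unfolding Srep_def dopen_def by auto

lemma Srep_cont_sub:
  assumes "p \<in> Srep Y" "U \<subseteq> fst p"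
  shows "continuous_map (subtopology Y U) euclideanreal (snd p)"
  using Srep_D(2)[OF assms(1)] assms(2) continuous_map_from_subtopology_mono by blast

lemma Srep_full: "continuous_map Y euclideanreal g \<Longrightarrow> (topspace Y, g) \<in> Srep Y"
  by (rule Srep_I) (auto simp: dopen_topspace continuous_map_from_subtopology)

lemma Srep_szero: "szero Y \<in> Srep Y" unfolding szero_def by (rule Srep_full) simp
lemma Srep_sone: "sone Y \<in> Srep Y" unfolding sone_def by (rule Srep_full) simp

lemma Srep_splus: "p \<in> Srep Y \<Longrightarrow> q \<in> Srep Y \<Longrightarrow> splus p q \<in> Srep Y"
  unfolding splus_def
  by (rule Srep_I) (auto simp: dopen_Int Srep_D intro!: continuous_map_add Srep_cont_sub)

lemma Srep_sminus: "p \<in> Srep Y \<Longrightarrow> q \<in> Srep Y \<Longrightarrow> sminus p q \<in> Srep Y"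
  unfolding sminus_def
  by (rule Srep_I) (auto simp: dopen_Int Srep_D intro!: continuous_map_diff Srep_cont_sub)

lemma Srep_ssup: "p \<in> Srep Y \<Longrightarrow> q \<in> Srep Y \<Longrightarrow> ssup p q \<in> Srep Y"
  unfolding ssup_def
  by (rule Srep_I) (auto simp: dopen_Int Srep_D intro!: continuous_map_real_max Srep_cont_sub)

lemma Srep_sinf: "p \<in> Srep Y \<Longrightarrow> q \<in> Srep Y \<Longrightarrow> sinf p q \<in> Srep Y"
  unfolding sinf_def
  by (rule Srep_I) (auto simp: dopen_Int Srep_D intro!: continuous_map_real_min Srep_cont_sub)

lemma Srep_sabs: "p \<in> Srep Y \<Longrightarrow> sabs p \<in> Srep Y"
  unfolding sabs_def
  by (rule Srep_I) (auto simp: Srep_D intro!: continuous_map_real_abs Srep_cont_sub)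

lemma Srep_sscale: "p \<in> Srep Y \<Longrightarrow> sscale c p \<in> Srep Y"
  unfolding sscale_def
  by (rule Srep_I) (auto simp: Srep_D intro!: continuous_map_real_mult_left Srep_cont_sub)

lemma sle_dense:
  assumes "p \<in> Srep Y" "q \<in> Srep Y" "dopen Y V"
    "\<forall>t\<in>fst p \<inter> fst q \<inter> V. snd p t \<le> snd q t"
  shows "sle p q"
  unfolding sle_def
proof
  fix t assume t: "t \<in> fst p \<inter> fst q"
  show "snd p t \<le> snd q t"
    by (rule ineq_extend[where U="fst p \<inter> fst q" and V=V])
       (use assms t in \<open>auto simp: Srep_D intro!: Srep_cont_sub\<close>)
qed

lemma sequiv_dense:
  assumes "p \<in> Srep Y" "q \<in> Srep Y" "dopen Y V"
    "\<forall>t\<in>fst p \<inter> fst q \<inter> V. snd p t = snd q t"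
  shows "sequiv p q"
proof -
  have "sle p q" by (rule sle_dense[OF assms(1-3)]) (use assms(4) in auto)
  moreover have "sle q p" by (rule sle_dense[OF assms(2,1,3)]) (use assms(4) in auto)
  ultimately show ?thesis unfolding sle_def sequiv_def by (auto intro: order_antisym)
qed

lemma slice_open:
  assumes "openin (sum_topology X I) U" "\<alpha> \<in> I"
  shows "openin (X \<alpha>) {s. (\<alpha>, s) \<in> U}"
  using assms unfolding openin_sum_topology by blast

lemma slice_dopen:
  assumes "dopen (sum_topology X I) U" "\<alpha> \<in> I"
  shows "dopen (X \<alpha>) {s. (\<alpha>, s) \<in> U}"
  unfolding dopen_def
proof
  show "openin (X \<alpha>) {s. (\<alpha>, s) \<in> U}" using assms(1) slice_open[OF _ assms(2), of X U] unfolding dopen_def by simp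
  show "X \<alpha> closure_of {s. (\<alpha>, s) \<in> U} = topspace (X \<alpha>)" unfolding dense_intersects_open
  proof (intro allI impI notI)
    fix Q assume O0: "openin (X \<alpha>) Q \<and> Q \<noteq> {}" and O3: "{s. (\<alpha>, s) \<in> U} \<inter> Q = {}"
    have O: "openin (X \<alpha>) Q" "Q \<noteq> {}" "{s. (\<alpha>, s) \<in> U} \<inter> Q = {}" using O0 O3 by auto
    define S where "S = Sigma I (\<lambda>i. if i = \<alpha> then Q else {})"
    have "openin (sum_topology X I) S" unfolding S_def openin_sum_topology
      using O openin_subset[OF O(1)] assms(2) by (auto split: if_splits)
    moreover have "S \<noteq> {}"
    proof -
      obtain q where q: "q \<in> Q" using O(2) by blast
      have "(\<alpha>, q) \<in> S" unfolding S_def using q assms(2) by simp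
      then show ?thesis by blast
    qed
    ultimately obtain z where "z \<in> S" "z \<in> U" using dopen_meets[OF assms(1)] by blast
    then show False using O(3) unfolding S_def by (auto split: if_splits)
  qed
qed

lemma slice_cont:
  assumes "p \<in> Srep (sum_topology X I)" "\<alpha> \<in> I" "S \<subseteq> {s. (\<alpha>, s) \<in> fst p}"
  shows "continuous_map (subtopology (X \<alpha>) S) euclideanreal (\<lambda>s. snd p (\<alpha>, s))"
proof -
  have "continuous_map (subtopology (X \<alpha>) S) (subtopology (sum_topology X I) (fst p)) (\<lambda>s. (\<alpha>, s))"
    using assms(2,3) continuous_map_component_injection[OF assms(2), of X]
    by (auto simp: continuous_map_in_subtopology continuous_map_from_subtopology)
  then show ?thesis using Srep_D(2)[OF assms(1)] continuous_map_compose[unfolded o_def] by blast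
qed

lemma sle_slices:
  assumes "p \<in> Srep (sum_topology X I)" "q \<in> Srep (sum_topology X I)"
    "\<forall>\<alpha>\<in>I. \<exists>V. dopen (X \<alpha>) V \<and>
        (\<forall>s\<in>V. (\<alpha>, s) \<in> fst p \<longrightarrow> (\<alpha>, s) \<in> fst q \<longrightarrow> snd p (\<alpha>, s) \<le> snd q (\<alpha>, s))"
  shows "sle p q"
  unfolding sle_def
proof (clarify)
  fix \<alpha> t assume t: "(\<alpha>, t) \<in> fst p" "(\<alpha>, t) \<in> fst q"
  then have aI: "\<alpha> \<in> I" using Srep_D(4)[OF assms(1)] by auto
  obtain V where V: "dopen (X \<alpha>) V"
    "\<forall>s\<in>V. (\<alpha>, s) \<in> fst p \<longrightarrow> (\<alpha>, s) \<in> fst q \<longrightarrow> snd p (\<alpha>, s) \<le> snd q (\<alpha>, s)"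
    using assms(3) aI by blast
  let ?U = "{s. (\<alpha>, s) \<in> fst p} \<inter> {s. (\<alpha>, s) \<in> fst q}"
  have oU: "openin (X \<alpha>) ?U" using slice_open[OF Srep_D(3)[OF assms(1)] aI]
      slice_open[OF Srep_D(3)[OF assms(2)] aI] by blast
  show "snd p (\<alpha>, t) \<le> snd q (\<alpha>, t)"
    by (rule ineq_extend[OF oU _ _ V(1), where F="\<lambda>s. snd p (\<alpha>, s)" and G="\<lambda>s. snd q (\<alpha>, s)"])
       (use V(2) t in \<open>auto intro!: slice_cont[OF assms(1) aI] slice_cont[OF assms(2) aI]\<close>)
qed

locale wick =
  fixes I :: "'i set"
    and B :: "'i \<Rightarrow> 'e::{ordered_real_vector,lattice} set"
    and u :: "'i \<Rightarrow> 'e"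
    and X :: "'i \<Rightarrow> 'x topology"
    and Ta :: "'i \<Rightarrow> 'e \<Rightarrow> 'x srep"
    and T :: "'e \<Rightarrow> ('i \<times> 'x) srep"
  assumes bands: "\<forall>\<alpha>\<in>I. is_band (B \<alpha>)"
    and disj: "\<forall>\<alpha>\<in>I. \<forall>\<beta>\<in>I. \<alpha> \<noteq> \<beta> \<longrightarrow> (\<forall>a\<in>B \<alpha>. \<forall>b\<in>B \<beta>. vdisjoint a b)"
    and units: "\<forall>\<alpha>\<in>I. weak_unit_of (B \<alpha>) (u \<alpha>)"
    and decomp: "\<forall>x. \<exists>y. band_decomp I B x y"
    and cpt: "\<forall>\<alpha>\<in>I. compact_space (X \<alpha>) \<and> Hausdorff_space (X \<alpha>)"
    and hom: "\<forall>\<alpha>\<in>I. inj_lattice_hom_S (B \<alpha>) (X \<alpha>) (Ta \<alpha>)"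
    and unit1: "\<forall>\<alpha>\<in>I. sequiv (Ta \<alpha> (u \<alpha>)) (sone (X \<alpha>))"
    and dense: "\<forall>\<alpha>\<in>I. supnorm_closure_is_C (X \<alpha>) (Ta \<alpha>) (principal_ideal_in (B \<alpha>) (u \<alpha>))"
    and T_range: "\<forall>x. T x \<in> Srep (sum_topology X I)"
    and T_def: "\<forall>x y. band_decomp I B x y \<longrightarrow>
                  (\<forall>\<alpha>\<in>I. sequiv (sslice \<alpha> (T x)) (Ta \<alpha> (y \<alpha>)))"
begin

lemma B_ideal: "\<alpha> \<in> I \<Longrightarrow> is_ideal (B \<alpha>)" using bands unfolding is_band_def by blast

lemma B_zero: "\<alpha> \<in> I \<Longrightarrow> 0 \<in> B \<alpha>" using B_ideal unfolding is_ideal_def by blast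
lemma B_add: "\<alpha> \<in> I \<Longrightarrow> a \<in> B \<alpha> \<Longrightarrow> b \<in> B \<alpha> \<Longrightarrow> a + b \<in> B \<alpha>"
  using B_ideal unfolding is_ideal_def by blast
lemma B_scale: "\<alpha> \<in> I \<Longrightarrow> a \<in> B \<alpha> \<Longrightarrow> c *\<^sub>R a \<in> B \<alpha>"
  using B_ideal unfolding is_ideal_def by blast
lemma B_solid: "\<alpha> \<in> I \<Longrightarrow> a \<in> B \<alpha> \<Longrightarrow> vabs y \<le> vabs a \<Longrightarrow> y \<in> B \<alpha>"
  using B_ideal unfolding is_ideal_def by blast
lemma B_neg: "\<alpha> \<in> I \<Longrightarrow> a \<in> B \<alpha> \<Longrightarrow> - a \<in> B \<alpha>"
  using B_scale[of \<alpha> a "-1"] by simp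
lemma B_diff: "\<alpha> \<in> I \<Longrightarrow> a \<in> B \<alpha> \<Longrightarrow> b \<in> B \<alpha> \<Longrightarrow> a - b \<in> B \<alpha>"
  using B_add B_neg by (metis diff_conv_add_uminus)
lemma B_vpos: "\<alpha> \<in> I \<Longrightarrow> a \<in> B \<alpha> \<Longrightarrow> vpos a \<in> B \<alpha>"
  using B_solid vabs_vpos vpos_le_vabs by metis
lemma B_vneg: "\<alpha> \<in> I \<Longrightarrow> a \<in> B \<alpha> \<Longrightarrow> vneg a \<in> B \<alpha>"
  using B_solid vabs_vneg vneg_le_vabs by metis
lemma B_vabs: "\<alpha> \<in> I \<Longrightarrow> a \<in> B \<alpha> \<Longrightarrow> vabs a \<in> B \<alpha>"
  using B_solid vabs_vabs by (metis order_refl)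
lemma B_inf: "\<alpha> \<in> I \<Longrightarrow> a \<in> B \<alpha> \<Longrightarrow> b \<in> B \<alpha> \<Longrightarrow> inf a b \<in> B \<alpha>"
proof -
  assume h: "\<alpha> \<in> I" "a \<in> B \<alpha>" "b \<in> B \<alpha>"
  have s: "vabs a + vabs b \<in> B \<alpha>" using h B_add B_vabs by blast
  have "vabs (inf a b) \<le> vabs (vabs a + vabs b)"
    unfolding vabs_of_nonneg[OF add_nonneg_nonneg[OF vabs_ge0 vabs_ge0]] vabs_le_iff
  proof
    show "inf a b \<le> vabs a + vabs b"
      by (meson add_increasing2 inf.coboundedI1 le_vabs vabs_ge0)
    show "- inf a b \<le> vabs a + vabs b" unfolding E_neg_inf
      by (meson add_increasing add_increasing2 le_sup_iff neg_le_vabs vabs_ge0)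
  qed
  then show ?thesis using B_solid[OF h(1) s] by blast
qed

lemma bd_inf_gen:
  assumes aI: "\<alpha> \<in> I" and bd: "\<forall>\<beta>\<in>I. y \<beta> \<in> B \<beta>" and sup: "is_sup_of ((\<lambda>\<beta>. f (y \<beta>)) ` I) s"
    and f0: "\<And>a. 0 \<le> f a" and fa: "\<And>a. f a \<le> vabs a"
    and z: "z \<in> B \<alpha>" "0 \<le> z"
  shows "inf z s = inf z (f (y \<alpha>))"
proof -
  have 1: "is_sup_of ((\<lambda>a. inf z a) ` ((\<lambda>\<beta>. f (y \<beta>)) ` I)) (inf z s)" by (rule inf_sup_dist[OF sup])
  have zero: "inf z (f (y \<beta>)) = 0" if "\<beta> \<in> I" "\<beta> \<noteq> \<alpha>" for \<beta>
  proof -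
    have "vdisjoint z (y \<beta>)" using disj aI that z bd by metis
    then have "inf z (vabs (y \<beta>)) = 0" unfolding vdisjoint_def using vabs_of_nonneg[OF z(2)] by simp
    moreover have "inf z (f (y \<beta>)) \<le> inf z (vabs (y \<beta>))" using fa by (meson inf_mono order_refl)
    moreover have "0 \<le> inf z (f (y \<beta>))" using z f0 by simp
    ultimately show ?thesis by simp
  qed
  have 2: "is_sup_of ((\<lambda>a. inf z a) ` ((\<lambda>\<beta>. f (y \<beta>)) ` I)) (inf z (f (y \<alpha>)))"
    unfolding is_sup_of_def
  proof safe
    fix \<beta> assume "\<beta> \<in> I"
    then show "inf z (f (y \<beta>)) \<le> inf z (f (y \<alpha>))"
      using zero[of \<beta>] z f0 by (cases "\<beta> = \<alpha>") auto
  next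
    fix t assume "\<forall>v\<in>(\<lambda>a. inf z a) ` (\<lambda>\<beta>. f (y \<beta>)) ` I. v \<le> t"
    then show "inf z (f (y \<alpha>)) \<le> t" using aI by blast
  qed
  show ?thesis using is_sup_unique[OF 1 2] .
qed

lemma bd_inf:
  assumes "\<alpha> \<in> I" "band_decomp I B x y" "z \<in> B \<alpha>" "0 \<le> z"
  shows "inf z (vpos x) = inf z (vpos (y \<alpha>))" "inf z (vneg x) = inf z (vneg (y \<alpha>))"
proof -
  have ys: "\<forall>\<beta>\<in>I. y \<beta> \<in> B \<beta>" and s1: "is_sup_of ((\<lambda>\<beta>. vpos (y \<beta>)) ` I) (vpos x)"
    and s2: "is_sup_of ((\<lambda>\<beta>. vneg (y \<beta>)) ` I) (vneg x)"
    using assms(2) unfolding band_decomp_def by auto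
  show "inf z (vpos x) = inf z (vpos (y \<alpha>))"
    by (rule bd_inf_gen[OF assms(1) ys s1 vpos_ge0 vpos_le_vabs assms(3,4)])
  show "inf z (vneg x) = inf z (vneg (y \<alpha>))"
    by (rule bd_inf_gen[OF assms(1) ys s2 vneg_ge0 vneg_le_vabs assms(3,4)])
qed

lemma bd_le:
  assumes "\<alpha> \<in> I" "band_decomp I B x y"
  shows "vpos (y \<alpha>) \<le> vpos x" "vneg (y \<alpha>) \<le> vneg x"
  using assms unfolding band_decomp_def is_sup_of_def by auto

definition Bd :: "'i \<Rightarrow> 'e set" where "Bd \<alpha> = {c. \<forall>z\<in>B \<alpha>. vdisjoint c z}"

lemma Bd_add:
  assumes "a \<in> Bd \<alpha>" "b \<in> Bd \<alpha>" shows "a + b \<in> Bd \<alpha>"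
  unfolding Bd_def vdisjoint_def
proof safe
  fix z assume z: "z \<in> B \<alpha>"
  have "inf (vabs (a + b)) (vabs z) \<le> inf (vabs a + vabs b) (vabs z)"
    using vabs_triangle by (meson inf_mono order_refl)
  also have "\<dots> \<le> inf (vabs a) (vabs z) + inf (vabs b) (vabs z)" by (rule riesz_ineq) (auto intro: vabs_ge0)
  also have "\<dots> = 0" using assms z unfolding Bd_def vdisjoint_def by simp
  finally show "inf (vabs (a + b)) (vabs z) = 0" using vabs_ge0
    by (metis antisym le_inf_iff)
qed

lemma Bd_neg: "a \<in> Bd \<alpha> \<Longrightarrow> - a \<in> Bd \<alpha>"
  unfolding Bd_def vdisjoint_def by (simp add: vabs_uminus)

lemma Bd_diff: "a \<in> Bd \<alpha> \<Longrightarrow> b \<in> Bd \<alpha> \<Longrightarrow> a - b \<in> Bd \<alpha>"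
  using Bd_add Bd_neg by (metis diff_conv_add_uminus)

lemma Bd_B_zero: "c \<in> B \<alpha> \<Longrightarrow> c \<in> Bd \<alpha> \<Longrightarrow> c = 0"
  unfolding Bd_def vdisjoint_def using vabs_zero_iff by fastforce

lemma Kcomp:
  assumes aI: "\<alpha> \<in> I" and p: "p \<in> B \<alpha>" "0 \<le> p" "p \<le> a"
    and hz: "\<forall>z\<in>B \<alpha>. 0 \<le> z \<longrightarrow> inf z a = inf z p"
  shows "a - p \<in> Bd \<alpha>"
  unfolding Bd_def vdisjoint_def
proof safe
  fix z assume z: "z \<in> B \<alpha>"
  define m where "m = inf (vabs (a - p)) (vabs z)"
  have m0: "0 \<le> m" unfolding m_def by (simp add: vabs_ge0)
  have mz: "m \<le> vabs z" unfolding m_def by simp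
  have mB: "m \<in> B \<alpha>" using B_solid[OF aI z, of m] mz vabs_of_nonneg[OF m0] vabs_vabs by metis
  have ap: "vabs (a - p) = a - p" using p by (simp add: vabs_of_nonneg)
  have mp: "m + p \<in> B \<alpha>" "0 \<le> m + p" using B_add[OF aI mB p(1)] m0 p by auto
  have "inf (m + p) a = inf (m + p) p" using hz mp by blast
  also have "\<dots> = p" using m0 by (simp add: inf_absorb2)
  finally have 1: "inf (m + p) a = p" .
  have "m \<le> a - p" unfolding m_def ap by simp
  then have "m + p \<le> a" by (simp add: le_diff_eq)
  then have "inf (m + p) a = m + p" by (simp add: inf_absorb1)
  with 1 have "m = 0" by simp
  then show "inf (vabs (a - p)) (vabs z) = 0" unfolding m_def .
qed

lemma bd_comp:
  assumes aI: "\<alpha> \<in> I" and bd: "band_decomp I B x y"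
  shows "x - y \<alpha> \<in> Bd \<alpha>"
proof -
  have yB: "y \<alpha> \<in> B \<alpha>" using bd aI unfolding band_decomp_def by blast
  have 1: "vpos x - vpos (y \<alpha>) \<in> Bd \<alpha>"
    by (rule Kcomp[OF aI B_vpos[OF aI yB] vpos_ge0 bd_le(1)[OF aI bd]])
       (use bd_inf(1)[OF aI bd] in auto)
  have 2: "vneg x - vneg (y \<alpha>) \<in> Bd \<alpha>"
    by (rule Kcomp[OF aI B_vneg[OF aI yB] vneg_ge0 bd_le(2)[OF aI bd]])
       (use bd_inf(2)[OF aI bd] in auto)
  have "x - y \<alpha> = (vpos x - vpos (y \<alpha>)) - (vneg x - vneg (y \<alpha>))"
    using vpos_minus_vneg[of x] vpos_minus_vneg[of "y \<alpha>"] by (simp add: algebra_simps)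
  then show ?thesis using Bd_diff[OF 1 2] by simp
qed

lemma bd_unique:
  assumes aI: "\<alpha> \<in> I" and "band_decomp I B x y" "band_decomp I B x y'"
  shows "y \<alpha> = y' \<alpha>"
proof -
  have "y' \<alpha> - y \<alpha> = (x - y \<alpha>) - (x - y' \<alpha>)" by simp
  then have "y' \<alpha> - y \<alpha> \<in> Bd \<alpha>" using bd_comp[OF aI assms(2)] bd_comp[OF aI assms(3)] Bd_diff by metis
  moreover have "y' \<alpha> - y \<alpha> \<in> B \<alpha>" using assms aI B_diff unfolding band_decomp_def by blast
  ultimately show ?thesis using Bd_B_zero by fastforce
qed

definition dec :: "'e \<Rightarrow> 'i \<Rightarrow> 'e" where "dec x = (SOME y. band_decomp I B x y)"

lemma dec_bd: "band_decomp I B x (dec x)"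
  unfolding dec_def using decomp someI_ex by metis

lemma dec_eq: "\<alpha> \<in> I \<Longrightarrow> band_decomp I B x y \<Longrightarrow> dec x \<alpha> = y \<alpha>"
  using bd_unique dec_bd by blast

lemma dec_in: "\<alpha> \<in> I \<Longrightarrow> dec x \<alpha> \<in> B \<alpha>"
  using dec_bd unfolding band_decomp_def by blast

lemma dec_comp: "\<alpha> \<in> I \<Longrightarrow> x - dec x \<alpha> \<in> Bd \<alpha>"
  using bd_comp dec_bd by blast

lemma dec_add: "\<alpha> \<in> I \<Longrightarrow> dec (x + x') \<alpha> = dec x \<alpha> + dec x' \<alpha>"
proof -
  assume aI: "\<alpha> \<in> I"
  let ?v = "dec x \<alpha> + dec x' \<alpha> - dec (x + x') \<alpha>"
  have "?v \<in> B \<alpha>" using aI dec_in B_add B_diff by blast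
  moreover have "?v = (x + x' - dec (x + x') \<alpha>) - (x - dec x \<alpha>) - (x' - dec x' \<alpha>)"
    by (simp add: algebra_simps)
  then have "?v \<in> Bd \<alpha>" using dec_comp[OF aI] Bd_diff by metis
  ultimately show ?thesis using Bd_B_zero by fastforce
qed

lemma dec_zero: "\<alpha> \<in> I \<Longrightarrow> dec 0 \<alpha> = 0"
  using dec_add[of \<alpha> 0 0] by simp

lemma dec_neg: "\<alpha> \<in> I \<Longrightarrow> dec (- x) \<alpha> = - dec x \<alpha>"
proof -
  assume aI: "\<alpha> \<in> I"
  have "dec x \<alpha> + dec (- x) \<alpha> = 0" using dec_add[OF aI, of x "- x"] dec_zero[OF aI] by simp
  then show ?thesis by (simp add: add_eq_0_iff)
qed

lemma dec_diff: "\<alpha> \<in> I \<Longrightarrow> dec (x - x') \<alpha> = dec x \<alpha> - dec x' \<alpha>"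
  using dec_add[of \<alpha> x "- x'"] dec_neg[of \<alpha> x'] by simp

lemma dec_nonneg: "\<alpha> \<in> I \<Longrightarrow> 0 \<le> x \<Longrightarrow> 0 \<le> dec x \<alpha>"
proof -
  assume aI: "\<alpha> \<in> I" and x: "0 \<le> x"
  have "vneg (dec x \<alpha>) \<le> vneg x" by (rule bd_le(2)[OF aI dec_bd])
  also have "vneg x = 0" using x by (simp add: vneg_of_nonneg)
  finally have "vneg (dec x \<alpha>) = 0" using vneg_ge0 by (metis antisym)
  then show ?thesis using nonneg_iff_vneg by blast
qed

lemma dec_mono: "\<alpha> \<in> I \<Longrightarrow> x \<le> x' \<Longrightarrow> dec x \<alpha> \<le> dec x' \<alpha>"
  using dec_nonneg[of \<alpha> "x' - x"] dec_diff[of \<alpha> x' x] by simp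

lemma dec_reflect:
  assumes "\<forall>\<alpha>\<in>I. dec a \<alpha> \<le> dec e \<alpha>" shows "a \<le> e"
proof -
  let ?w = "e - a"
  have "\<forall>\<alpha>\<in>I. vneg (dec ?w \<alpha>) = 0"
    using assms dec_diff nonneg_iff_vneg by (metis diff_ge_0_iff_ge)
  moreover have "is_sup_of ((\<lambda>\<alpha>. vneg (dec ?w \<alpha>)) ` I) (vneg ?w)"
    using dec_bd unfolding band_decomp_def by blast
  ultimately have "vneg ?w \<le> 0" unfolding is_sup_of_def by auto
  then have "vneg ?w = 0" using vneg_ge0 by (metis antisym)
  then have "0 \<le> e - a" using nonneg_iff_vneg[of "e - a"] by simp
  then show ?thesis by simp
qed

lemma dec_B:
  assumes aI: "\<alpha> \<in> I" and bI: "\<beta> \<in> I" and e: "e \<in> B \<alpha>"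
  shows "dec e \<beta> = (if \<beta> = \<alpha> then e else 0)"
proof -
  let ?y = "\<lambda>\<gamma>. if \<gamma> = \<alpha> then e else 0"
  have "band_decomp I B e ?y"
    unfolding band_decomp_def is_sup_of_def
    using aI e B_zero by (auto simp: vpos_ge0 vneg_ge0 vpos_def[of 0] vneg_def[of 0])
  then show ?thesis using dec_eq[OF bI] by simp
qed

lemma dec_vpos: "\<alpha> \<in> I \<Longrightarrow> dec (vpos x) \<alpha> = vpos (dec x \<alpha>)"
proof -
  assume aI: "\<alpha> \<in> I"
  have "band_decomp I B (vpos x) (\<lambda>\<beta>. vpos (dec x \<beta>))"
    using dec_bd[of x] aI unfolding band_decomp_def
    by (auto simp: vpos_vpos vneg_vpos B_vpos is_sup_of_def)
  then show ?thesis using dec_eq[OF aI] by simp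
qed

lemma vneg_as_vpos: "vneg x = vpos (- x)" by (simp add: vpos_uminus)

lemma dec_vneg: "\<alpha> \<in> I \<Longrightarrow> dec (vneg x) \<alpha> = vneg (dec x \<alpha>)"
  using dec_vpos[of \<alpha> "- x"] dec_neg[of \<alpha> x] by (simp add: vpos_uminus)

lemma dec_vabs: "\<alpha> \<in> I \<Longrightarrow> dec (vabs x) \<alpha> = vabs (dec x \<alpha>)"
  by (simp add: vabs_eq dec_add dec_vpos dec_vneg)

lemma dec_inf:
  assumes aI: "\<alpha> \<in> I" and "0 \<le> a" "0 \<le> b"
  shows "dec (inf a b) \<alpha> = inf (dec a \<alpha>) (dec b \<alpha>)"
proof (rule antisym)
  show "dec (inf a b) \<alpha> \<le> inf (dec a \<alpha>) (dec b \<alpha>)" using dec_mono[OF aI] by simp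
  define m where "m = inf (dec a \<alpha>) (dec b \<alpha>)"
  have m0: "0 \<le> m" unfolding m_def using dec_nonneg aI assms by simp
  have mB: "m \<in> B \<alpha>" unfolding m_def using B_inf dec_in aI by blast
  have key: "inf m c = inf m (dec c \<alpha>)" if "0 \<le> c" for c
  proof -
    have "inf m (vpos c) = inf m (vpos (dec c \<alpha>))" by (rule bd_inf(1)[OF aI dec_bd mB m0])
    then show ?thesis using that dec_nonneg[OF aI that] by (simp add: vpos_of_nonneg)
  qed
  have "inf m a = m" using key[OF assms(2)] unfolding m_def by (simp add: inf.absorb1)
  moreover have "inf m b = m" using key[OF assms(3)] unfolding m_def by (simp add: inf.absorb1)
  ultimately have "m \<le> inf a b" by (metis inf.orderI le_inf_iff)
  then have "inf m (inf a b) = m" by (simp add: inf.absorb1)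
  then have "inf m (dec (inf a b) \<alpha>) = m" using key[of "inf a b"] assms by simp
  then show "m \<le> dec (inf a b) \<alpha>" by (metis inf.orderI inf_commute le_inf_iff)
qed

end

context wick begin

abbreviation "SX \<equiv> sum_topology X I"

lemma hom_a: "\<alpha> \<in> I \<Longrightarrow> inj_lattice_hom_S (B \<alpha>) (X \<alpha>) (Ta \<alpha>)" using hom by blast

lemma hom_Srep: "inj_lattice_hom_S BB Y F \<Longrightarrow> a \<in> BB \<Longrightarrow> F a \<in> Srep Y"
  unfolding inj_lattice_hom_S_def by simp

lemma hom_add: "inj_lattice_hom_S BB Y F \<Longrightarrow> a \<in> BB \<Longrightarrow> b \<in> BB \<Longrightarrow> sequiv (F (a + b)) (splus (F a) (F b))"
  unfolding inj_lattice_hom_S_def by simp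
lemma hom_scale: "inj_lattice_hom_S BB Y F \<Longrightarrow> a \<in> BB \<Longrightarrow> sequiv (F (c *\<^sub>R a)) (sscale c (F a))"
  unfolding inj_lattice_hom_S_def by simp
lemma hom_sup: "inj_lattice_hom_S BB Y F \<Longrightarrow> a \<in> BB \<Longrightarrow> b \<in> BB \<Longrightarrow> sequiv (F (sup a b)) (ssup (F a) (F b))"
  unfolding inj_lattice_hom_S_def by simp
lemma hom_inf: "inj_lattice_hom_S BB Y F \<Longrightarrow> a \<in> BB \<Longrightarrow> b \<in> BB \<Longrightarrow> sequiv (F (inf a b)) (sinf (F a) (F b))"
  unfolding inj_lattice_hom_S_def by simp
lemma hom_inj: "inj_lattice_hom_S BB Y F \<Longrightarrow> a \<in> BB \<Longrightarrow> b \<in> BB \<Longrightarrow> sequiv (F a) (F b) \<Longrightarrow> a = b"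
  unfolding inj_lattice_hom_S_def by blast

lemma Ta_Srep: "\<alpha> \<in> I \<Longrightarrow> a \<in> B \<alpha> \<Longrightarrow> Ta \<alpha> a \<in> Srep (X \<alpha>)"
  using hom_Srep[OF hom_a] by simp

lemma Ta_dopen: "\<alpha> \<in> I \<Longrightarrow> a \<in> B \<alpha> \<Longrightarrow> dopen (X \<alpha>) (fst (Ta \<alpha> a))"
  using Ta_Srep Srep_D by blast

lemma Ta_add_pt: "\<alpha> \<in> I \<Longrightarrow> a \<in> B \<alpha> \<Longrightarrow> b \<in> B \<alpha> \<Longrightarrow> t \<in> fst (Ta \<alpha> (a + b)) \<Longrightarrow>
   t \<in> fst (Ta \<alpha> a) \<Longrightarrow> t \<in> fst (Ta \<alpha> b) \<Longrightarrow> snd (Ta \<alpha> (a + b)) t = snd (Ta \<alpha> a) t + snd (Ta \<alpha> b) t"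
  using hom_add[OF hom_a, of \<alpha> a b] unfolding sequiv_def splus_def by auto

lemma Ta_scale_pt: "\<alpha> \<in> I \<Longrightarrow> a \<in> B \<alpha> \<Longrightarrow> t \<in> fst (Ta \<alpha> (c *\<^sub>R a)) \<Longrightarrow>
   t \<in> fst (Ta \<alpha> a) \<Longrightarrow> snd (Ta \<alpha> (c *\<^sub>R a)) t = c * snd (Ta \<alpha> a) t"
  using hom_scale[OF hom_a, of \<alpha> a c] unfolding sequiv_def sscale_def by auto

lemma Ta_sup_pt: "\<alpha> \<in> I \<Longrightarrow> a \<in> B \<alpha> \<Longrightarrow> b \<in> B \<alpha> \<Longrightarrow> t \<in> fst (Ta \<alpha> (sup a b)) \<Longrightarrow>
   t \<in> fst (Ta \<alpha> a) \<Longrightarrow> t \<in> fst (Ta \<alpha> b) \<Longrightarrow> snd (Ta \<alpha> (sup a b)) t = max (snd (Ta \<alpha> a) t) (snd (Ta \<alpha> b) t)"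
  using hom_sup[OF hom_a, of \<alpha> a b] unfolding sequiv_def ssup_def by auto

lemma Ta_inf_pt: "\<alpha> \<in> I \<Longrightarrow> a \<in> B \<alpha> \<Longrightarrow> b \<in> B \<alpha> \<Longrightarrow> t \<in> fst (Ta \<alpha> (inf a b)) \<Longrightarrow>
   t \<in> fst (Ta \<alpha> a) \<Longrightarrow> t \<in> fst (Ta \<alpha> b) \<Longrightarrow> snd (Ta \<alpha> (inf a b)) t = min (snd (Ta \<alpha> a) t) (snd (Ta \<alpha> b) t)"
  using hom_inf[OF hom_a, of \<alpha> a b] unfolding sequiv_def sinf_def by auto

lemma Ta_inj: "\<alpha> \<in> I \<Longrightarrow> a \<in> B \<alpha> \<Longrightarrow> b \<in> B \<alpha> \<Longrightarrow> sequiv (Ta \<alpha> a) (Ta \<alpha> b) \<Longrightarrow> a = b"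
  using hom_inj[OF hom_a] by blast

lemma Ta_zero_pt: "\<alpha> \<in> I \<Longrightarrow> t \<in> fst (Ta \<alpha> 0) \<Longrightarrow> snd (Ta \<alpha> 0) t = 0"
  using Ta_scale_pt[of \<alpha> 0 t 0] B_zero by simp

lemma u_in: "\<alpha> \<in> I \<Longrightarrow> u \<alpha> \<in> B \<alpha>" and u_nonneg: "\<alpha> \<in> I \<Longrightarrow> 0 \<le> u \<alpha>"
  using units unfolding weak_unit_of_def by auto

lemma Ta_u_pt: "\<alpha> \<in> I \<Longrightarrow> t \<in> fst (Ta \<alpha> (u \<alpha>)) \<Longrightarrow> snd (Ta \<alpha> (u \<alpha>)) t = 1"
proof -
  assume aI: "\<alpha> \<in> I" and t: "t \<in> fst (Ta \<alpha> (u \<alpha>))"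
  have "t \<in> topspace (X \<alpha>)" using t Srep_D(4)[OF Ta_Srep[OF aI u_in[OF aI]]] by blast
  then show ?thesis using unit1 aI t unfolding sequiv_def sone_def by auto
qed

lemma Ta_mono: "\<alpha> \<in> I \<Longrightarrow> a \<in> B \<alpha> \<Longrightarrow> b \<in> B \<alpha> \<Longrightarrow> a \<le> b \<Longrightarrow> sle (Ta \<alpha> a) (Ta \<alpha> b)"
proof -
  assume h: "\<alpha> \<in> I" "a \<in> B \<alpha>" "b \<in> B \<alpha>" "a \<le> b"
  have "sup a b = b" using h(4) by (simp add: sup_absorb2)
  then show ?thesis unfolding sle_def using Ta_sup_pt[OF h(1-3)] by (metis IntD1 IntD2 max.cobounded1)
qed

lemma Ta_reflect: "\<alpha> \<in> I \<Longrightarrow> a \<in> B \<alpha> \<Longrightarrow> b \<in> B \<alpha> \<Longrightarrow> sle (Ta \<alpha> a) (Ta \<alpha> b) \<Longrightarrow> a \<le> b"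
proof -
  assume h: "\<alpha> \<in> I" "a \<in> B \<alpha>" "b \<in> B \<alpha>" "sle (Ta \<alpha> a) (Ta \<alpha> b)"
  have iB: "inf a b \<in> B \<alpha>" using B_inf h by blast
  have "sequiv (Ta \<alpha> (inf a b)) (Ta \<alpha> a)"
    by (rule sequiv_dense[OF Ta_Srep[OF h(1) iB] Ta_Srep[OF h(1,2)] Ta_dopen[OF h(1,3)]])
       (use h Ta_inf_pt[OF h(1-3)] in \<open>auto simp: sle_def\<close>)
  then have "inf a b = a" using Ta_inj[OF h(1) iB h(2)] by blast
  then show ?thesis by (metis inf.orderI)
qed

lemma Ta_nonneg: "\<alpha> \<in> I \<Longrightarrow> a \<in> B \<alpha> \<Longrightarrow> 0 \<le> a \<Longrightarrow> sle (szero (X \<alpha>)) (Ta \<alpha> a)"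
proof -
  assume h: "\<alpha> \<in> I" "a \<in> B \<alpha>" "0 \<le> a"
  have "sle (Ta \<alpha> 0) (Ta \<alpha> a)" by (rule Ta_mono[OF h(1) B_zero[OF h(1)] h(2,3)])
  then show ?thesis
    by (intro sle_dense[OF Srep_szero Ta_Srep[OF h(1,2)] Ta_dopen[OF h(1) B_zero[OF h(1)]]])
       (use Ta_zero_pt[OF h(1)] in \<open>auto simp: sle_def szero_def\<close>)
qed

lemma Ta_nonneg_pt: "\<alpha> \<in> I \<Longrightarrow> a \<in> B \<alpha> \<Longrightarrow> 0 \<le> a \<Longrightarrow> t \<in> fst (Ta \<alpha> a) \<Longrightarrow> 0 \<le> snd (Ta \<alpha> a) t"
proof -
  assume h: "\<alpha> \<in> I" "a \<in> B \<alpha>" "0 \<le> a" "t \<in> fst (Ta \<alpha> a)"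
  have "t \<in> topspace (X \<alpha>)" using h(4) Srep_D(4)[OF Ta_Srep[OF h(1,2)]] by blast
  then show ?thesis using Ta_nonneg[OF h(1-3)] h(4) unfolding sle_def szero_def by simp
qed

lemma T_Srep: "T x \<in> Srep SX" using T_range by blast

lemma T_slice_pt: "\<alpha> \<in> I \<Longrightarrow> (\<alpha>, t) \<in> fst (T x) \<Longrightarrow> t \<in> fst (Ta \<alpha> (dec x \<alpha>)) \<Longrightarrow>
   snd (T x) (\<alpha>, t) = snd (Ta \<alpha> (dec x \<alpha>)) t"
proof -
  assume h: "\<alpha> \<in> I" "(\<alpha>, t) \<in> fst (T x)" "t \<in> fst (Ta \<alpha> (dec x \<alpha>))"
  have "sequiv (sslice \<alpha> (T x)) (Ta \<alpha> (dec x \<alpha>))" using T_def[rule_format, OF dec_bd h(1)] .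
  then show ?thesis using h(2,3) unfolding sequiv_def sslice_def by simp
qed

lemma T_dopen_slice: "\<alpha> \<in> I \<Longrightarrow> dopen (X \<alpha>) {s. (\<alpha>, s) \<in> fst (T x)}"
  using slice_dopen[OF Srep_D(1)[OF T_Srep]] by simp

lemma Tdec_dopen: "\<alpha> \<in> I \<Longrightarrow> dopen (X \<alpha>) (fst (Ta \<alpha> (dec x \<alpha>)))"
  using Ta_dopen dec_in by blast

lemma T_mono: "x \<le> x' \<Longrightarrow> sle (T x) (T x')"
proof (rule sle_slices[OF T_Srep T_Srep], intro ballI)
  fix \<alpha> assume aI: "\<alpha> \<in> I" and xx: "x \<le> x'"
  have le: "sle (Ta \<alpha> (dec x \<alpha>)) (Ta \<alpha> (dec x' \<alpha>))"
    using Ta_mono[OF aI dec_in[OF aI] dec_in[OF aI] dec_mono[OF aI xx]] .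
  show "\<exists>V. dopen (X \<alpha>) V \<and> (\<forall>s\<in>V. (\<alpha>, s) \<in> fst (T x) \<longrightarrow> (\<alpha>, s) \<in> fst (T x') \<longrightarrow>
      snd (T x) (\<alpha>, s) \<le> snd (T x') (\<alpha>, s))"
    by (rule exI[of _ "fst (Ta \<alpha> (dec x \<alpha>)) \<inter> fst (Ta \<alpha> (dec x' \<alpha>))"])
       (use le aI in \<open>auto simp: dopen_Int Tdec_dopen T_slice_pt sle_def\<close>)
qed

lemma T_nonneg: "0 \<le> x \<Longrightarrow> sle (szero SX) (T x)"
proof (rule sle_slices[OF Srep_szero T_Srep], intro ballI)
  fix \<alpha> assume aI: "\<alpha> \<in> I" and x: "0 \<le> x"
  show "\<exists>V. dopen (X \<alpha>) V \<and> (\<forall>s\<in>V. (\<alpha>, s) \<in> fst (szero SX) \<longrightarrow> (\<alpha>, s) \<in> fst (T x) \<longrightarrow>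
      snd (szero SX) (\<alpha>, s) \<le> snd (T x) (\<alpha>, s))"
    by (rule exI[of _ "fst (Ta \<alpha> (dec x \<alpha>))"])
       (use aI x in \<open>auto simp: Tdec_dopen T_slice_pt szero_def intro!: Ta_nonneg_pt dec_in dec_nonneg\<close>)
qed

lemma T_reflect: "sle (T a) (T e) \<Longrightarrow> a \<le> e"
proof (rule dec_reflect, intro ballI)
  fix \<alpha> assume le: "sle (T a) (T e)" and aI: "\<alpha> \<in> I"
  show "dec a \<alpha> \<le> dec e \<alpha>"
  proof (rule Ta_reflect[OF aI dec_in[OF aI] dec_in[OF aI]])
    show "sle (Ta \<alpha> (dec a \<alpha>)) (Ta \<alpha> (dec e \<alpha>))"
      by (rule sle_dense[OF Ta_Srep[OF aI dec_in[OF aI]] Ta_Srep[OF aI dec_in[OF aI]]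
            dopen_Int[OF T_dopen_slice[OF aI, of a] T_dopen_slice[OF aI, of e]]])
         (use le aI in \<open>auto simp: T_slice_pt[symmetric] sle_def\<close>)
  qed
qed

end

context wick begin

lemma density:
  assumes aI: "\<alpha> \<in> I" and oU: "openin (X \<alpha>) U"
    and hc: "continuous_map (subtopology (X \<alpha>) U) euclideanreal hf"
    and h0: "\<forall>s\<in>U. 0 \<le> hf s" and t0: "t0 \<in> U" and eta: "0 < \<eta>"
  obtains e k where "e \<in> B \<alpha>" "0 \<le> e" "continuous_map (X \<alpha>) euclideanreal k"
    "\<forall>s\<in>topspace (X \<alpha>). 0 \<le> k s" "\<forall>s\<in>U. k s \<le> hf s" "\<forall>s\<in>topspace (X \<alpha>) - U. k s = 0"
    "\<forall>s\<in>fst (Ta \<alpha> e). snd (Ta \<alpha> e) s = k s" "hf t0 - \<eta> < k t0"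
proof (cases "hf t0 < \<eta>")
  case True
  show ?thesis
    by (rule that[of 0 "\<lambda>_. 0"]) (use True B_zero[OF aI] Ta_zero_pt[OF aI] h0 in auto)
next
  case False
  let ?Y = "X \<alpha>"
  define c where "c = hf t0 - \<eta> / 3"
  have c0: "0 < c" using False eta unfolding c_def by simp
  define W where "W = {s \<in> U. 0 < hf s - c}"
  have oW: "openin ?Y W" unfolding W_def
    by (rule openin_pos_set[OF oU]) (intro continuous_map_diff hc continuous_map_const[THEN iffD2]; simp)
  have t0W: "t0 \<in> W" unfolding W_def c_def using t0 eta by simp
  have WU: "W \<subseteq> U" unfolding W_def by auto
  have Wsub: "W \<subseteq> topspace ?Y" using oW openin_subset by blast
  have t0top: "t0 \<in> topspace ?Y" using t0W Wsub by blast
  have cH: "compact_space ?Y" "Hausdorff_space ?Y" using cpt aI by auto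
  have normal: "normal_space ?Y" by (rule compact_Hausdorff_or_regular_imp_normal_space) (use cH in auto)
  have t1: "t1_space ?Y" using Hausdorff_imp_t1_space[OF cH(2)] .
  have cl1: "closedin ?Y {t0}" using t1 t0top unfolding t1_space_closedin_singleton by simp
  have cl2: "closedin ?Y (topspace ?Y - W)" using oW by blast
  have dj: "disjnt (topspace ?Y - W) {t0}" using t0W by (simp add: disjnt_def)
  have z1: "0 \<le> (1::real)" by simp
  obtain \<phi> where \<phi>c: "continuous_map ?Y (top_of_set {0..(1::real)}) \<phi>"
    and \<phi>S: "\<phi> ` (topspace ?Y - W) \<subseteq> {0}" and \<phi>t: "\<phi> ` {t0} \<subseteq> {1}"
    using Urysohn_lemma[OF normal cl2 cl1 dj z1] by this
  have \<phi>cc: "continuous_map ?Y euclideanreal \<phi> \<and> \<phi> \<in> topspace ?Y \<rightarrow> {0..1}"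
    using \<phi>c unfolding continuous_map_in_subtopology .
  have \<phi>c': "continuous_map ?Y euclideanreal \<phi>" using \<phi>cc by simp
  have \<phi>r: "\<forall>s\<in>topspace ?Y. 0 \<le> \<phi> s \<and> \<phi> s \<le> 1" using \<phi>cc by (auto simp: Pi_iff)
  define g0 where "g0 = (\<lambda>s. c * \<phi> s)"
  have g0c: "continuous_map ?Y euclideanreal g0" unfolding g0_def using \<phi>c' by (rule continuous_map_real_mult_left)
  define \<epsilon> where "\<epsilon> = \<eta> / 4"
  have eps: "0 < \<epsilon>" unfolding \<epsilon>_def using eta by simp
  obtain y h where yP: "y \<in> principal_ideal_in (B \<alpha>) (u \<alpha>)" and hcont: "continuous_map ?Y euclideanreal h"
    and yh: "sequiv (Ta \<alpha> y) (topspace ?Y, h)" and approx: "\<forall>t\<in>topspace ?Y. \<bar>g0 t - h t\<bar> \<le> \<epsilon>"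
    using dense aI g0c eps unfolding supnorm_closure_is_C_def by metis
  have yB: "y \<in> B \<alpha>" using yP unfolding principal_ideal_in_def by blast
  have uB: "u \<alpha> \<in> B \<alpha>" using u_in[OF aI] .
  define w1 where "w1 = (- \<epsilon>) *\<^sub>R u \<alpha>"
  define w2 where "w2 = y + w1"
  define e where "e = sup w2 0"
  have w1B: "w1 \<in> B \<alpha>" unfolding w1_def using B_scale[OF aI uB] .
  have w2B: "w2 \<in> B \<alpha>" unfolding w2_def using B_add[OF aI yB w1B] .
  have eB: "e \<in> B \<alpha>" unfolding e_def using B_vpos[OF aI w2B] unfolding vpos_def .
  have e0: "0 \<le> e" unfolding e_def by simp
  define k where "k = (\<lambda>s. max (h s - \<epsilon>) 0)"
  have kc: "continuous_map ?Y euclideanreal k" unfolding k_def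
    by (intro continuous_map_real_max continuous_map_diff hcont) auto
  have eqk: "sequiv (Ta \<alpha> e) (topspace ?Y, k)"
  proof (rule sequiv_dense[OF Ta_Srep[OF aI eB] Srep_full[OF kc]])
    let ?V = "fst (Ta \<alpha> y) \<inter> fst (Ta \<alpha> w1) \<inter> fst (Ta \<alpha> (u \<alpha>)) \<inter> fst (Ta \<alpha> w2) \<inter> fst (Ta \<alpha> 0)"
    show "dopen ?Y ?V" using aI yB w1B uB w2B B_zero by (intro dopen_Int Ta_dopen) auto
    show "\<forall>t\<in>fst (Ta \<alpha> e) \<inter> fst (topspace ?Y, k) \<inter> ?V. snd (Ta \<alpha> e) t = snd (topspace ?Y, k) t"
    proof
      fix t assume t: "t \<in> fst (Ta \<alpha> e) \<inter> fst (topspace ?Y, k) \<inter> ?V"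
      have 1: "snd (Ta \<alpha> e) t = max (snd (Ta \<alpha> w2) t) (snd (Ta \<alpha> 0) t)"
        unfolding e_def using Ta_sup_pt[OF aI w2B B_zero[OF aI]] t e_def by auto
      have 2: "snd (Ta \<alpha> w2) t = snd (Ta \<alpha> y) t + snd (Ta \<alpha> w1) t"
        unfolding w2_def using Ta_add_pt[OF aI yB w1B] t w2_def by auto
      have tw: "t \<in> fst (Ta \<alpha> w1)" "t \<in> fst (Ta \<alpha> (u \<alpha>))" using t by auto
      have "snd (Ta \<alpha> ((- \<epsilon>) *\<^sub>R u \<alpha>)) t = (- \<epsilon>) * snd (Ta \<alpha> (u \<alpha>)) t"
        using tw(1)[unfolded w1_def] tw(2) by (rule Ta_scale_pt[OF aI uB])
      then have 3: "snd (Ta \<alpha> w1) t = - \<epsilon>" unfolding w1_def[symmetric] using Ta_u_pt[OF aI tw(2)] by simp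
      have 4: "snd (Ta \<alpha> y) t = h t" using yh t unfolding sequiv_def by auto
      have 5: "snd (Ta \<alpha> 0) t = 0" using Ta_zero_pt[OF aI] t by auto
      show "snd (Ta \<alpha> e) t = snd (topspace ?Y, k) t" using 1 2 3 4 5 by (simp add: k_def)
    qed
  qed
  show ?thesis
  proof (rule that[OF eB e0 kc])
    show "\<forall>s\<in>topspace ?Y. 0 \<le> k s" unfolding k_def by simp
    show "\<forall>s\<in>fst (Ta \<alpha> e). snd (Ta \<alpha> e) s = k s"
      using eqk Srep_D(4)[OF Ta_Srep[OF aI eB]] unfolding sequiv_def by auto
    have kW: "k s = 0" if "s \<in> topspace ?Y - W" for s
    proof -
      have "\<phi> s = 0" using \<phi>S that by auto
      then have "h s \<le> \<epsilon>" using approx that unfolding g0_def by auto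
      then show ?thesis unfolding k_def by simp
    qed
    show "\<forall>s\<in>topspace ?Y - U. k s = 0" using kW WU by auto
    show "\<forall>s\<in>U. k s \<le> hf s"
    proof
      fix s assume sU: "s \<in> U"
      have stop: "s \<in> topspace ?Y" using sU oU openin_subset by blast
      show "k s \<le> hf s"
      proof (cases "s \<in> W")
        case True
        have "h s \<le> g0 s + \<epsilon>" using approx stop by (smt (verit))
        also have "g0 s \<le> c" unfolding g0_def using \<phi>r stop c0 by (simp add: mult_left_le)
        finally have "k s \<le> c" unfolding k_def using c0 by simp
        also have "c < hf s" using True unfolding W_def by simp
        finally show ?thesis by simp
      next
        case False
        then show ?thesis using kW stop h0 sU by simp
      qed
    qed
    have "\<phi> t0 = 1" using \<phi>t by auto
    then have "g0 t0 = c" unfolding g0_def by simp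
    then have "h t0 \<ge> c - \<epsilon>" using approx t0top by (smt (verit))
    then have "k t0 \<ge> c - 2 * \<epsilon>" unfolding k_def by simp
    then show "hf t0 - \<eta> < k t0" unfolding c_def \<epsilon>_def using eta by simp
  qed
qed

end

context wick begin

lemma Ta_neg_pt: "\<alpha> \<in> I \<Longrightarrow> y \<in> B \<alpha> \<Longrightarrow> s \<in> fst (Ta \<alpha> (- y)) \<Longrightarrow> s \<in> fst (Ta \<alpha> y) \<Longrightarrow>
    snd (Ta \<alpha> (- y)) s = - snd (Ta \<alpha> y) s"
  using Ta_scale_pt[of \<alpha> y s "-1"] by simp

lemma Ta_vabs_pt: "\<alpha> \<in> I \<Longrightarrow> y \<in> B \<alpha> \<Longrightarrow> s \<in> fst (Ta \<alpha> (vabs y)) \<Longrightarrow> s \<in> fst (Ta \<alpha> (- y)) \<Longrightarrow>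
    s \<in> fst (Ta \<alpha> y) \<Longrightarrow> snd (Ta \<alpha> (vabs y)) s = \<bar>snd (Ta \<alpha> y) s\<bar>"
  unfolding vabs_def using Ta_sup_pt[of \<alpha> y "- y" s] Ta_neg_pt[of \<alpha> y s] B_neg[of \<alpha> y]
  by (auto simp: vabs_def)

lemma sle_trans_pt: "sle p q \<Longrightarrow> t \<in> fst p \<Longrightarrow> t \<in> fst q \<Longrightarrow> snd p t \<le> snd q t"
  unfolding sle_def by auto

lemma OC:
  assumes D0: "\<forall>d\<in>D. 0 \<le> d" and Dinf: "\<forall>l. (\<forall>d\<in>D. l \<le> d) \<longrightarrow> l \<le> 0"
    and wS: "w \<in> Srep SX" and lb: "\<forall>d\<in>D. sle w (T d)"
  shows "sle w (szero SX)"
proof (rule ccontr)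
  assume "\<not> sle w (szero SX)"
  then obtain \<alpha> t where p: "(\<alpha>, t) \<in> fst w" "0 < snd w (\<alpha>, t)"
    unfolding sle_def szero_def using Srep_D(4)[OF wS] by fastforce
  have aI: "\<alpha> \<in> I" using p Srep_D(4)[OF wS] by auto
  define U where "U = {s \<in> {s. (\<alpha>, s) \<in> fst w}. 0 < snd w (\<alpha>, s)}"
  have oU: "openin (X \<alpha>) U" unfolding U_def
    by (rule openin_pos_set[OF slice_open[OF Srep_D(3)[OF wS] aI] slice_cont[OF wS aI]]) simp
  have hc: "continuous_map (subtopology (X \<alpha>) U) euclideanreal (\<lambda>s. snd w (\<alpha>, s))"
    by (rule slice_cont[OF wS aI]) (auto simp: U_def)
  have tU: "t \<in> U" using p unfolding U_def by auto
  obtain e k where eB: "e \<in> B \<alpha>" and e0: "0 \<le> e" and kc: "continuous_map (X \<alpha>) euclideanreal k"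
    and k0: "\<forall>s\<in>topspace (X \<alpha>). 0 \<le> k s" and kU: "\<forall>s\<in>U. k s \<le> snd w (\<alpha>, s)"
    and kout: "\<forall>s\<in>topspace (X \<alpha>) - U. k s = 0" and ek: "\<forall>s\<in>fst (Ta \<alpha> e). snd (Ta \<alpha> e) s = k s"
    and kt: "snd w (\<alpha>, t) - snd w (\<alpha>, t) < k t"
    using density[OF aI oU hc _ tU p(2)] unfolding U_def by auto
  have "e \<le> d" if dD: "d \<in> D" for d
  proof -
    have d0: "0 \<le> d" using D0 dD by blast
    have dB: "dec d \<alpha> \<in> B \<alpha>" using dec_in[OF aI] .
    have dn: "0 \<le> dec d \<alpha>" using dec_nonneg[OF aI d0] .
    have "sle (Ta \<alpha> e) (Ta \<alpha> (dec d \<alpha>))"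
    proof (rule sle_dense[OF Ta_Srep[OF aI eB] Ta_Srep[OF aI dB] T_dopen_slice[OF aI, of d]], safe)
      fix s assume s: "s \<in> fst (Ta \<alpha> e)" "s \<in> fst (Ta \<alpha> (dec d \<alpha>))" "(\<alpha>, s) \<in> fst (T d)"
      have stop: "s \<in> topspace (X \<alpha>)" using s(1) Srep_D(4)[OF Ta_Srep[OF aI eB]] by blast
      show "snd (Ta \<alpha> e) s \<le> snd (Ta \<alpha> (dec d \<alpha>)) s"
      proof (cases "s \<in> U")
        case True
        have "snd (Ta \<alpha> e) s \<le> snd w (\<alpha>, s)" using ek kU s True by auto
        also have "\<dots> \<le> snd (T d) (\<alpha>, s)"
          using sle_trans_pt[OF lb[rule_format, OF dD]] True s(3) unfolding U_def by auto
        also have "\<dots> = snd (Ta \<alpha> (dec d \<alpha>)) s" using T_slice_pt[OF aI s(3) s(2)] .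
        finally show ?thesis .
      next
        case False
        then show ?thesis using ek kout stop s Ta_nonneg_pt[OF aI dB dn] by auto
      qed
    qed
    then have "e \<le> dec d \<alpha>" using Ta_reflect[OF aI eB dB] by blast
    also have "dec d \<alpha> \<le> d"
      using bd_le(1)[OF aI dec_bd, of d] vpos_of_nonneg[OF dn] vpos_of_nonneg[OF d0] by simp
    finally show ?thesis .
  qed
  then have "e \<le> 0" using Dinf by blast
  then have "e = 0" using e0 by simp
  have "k t \<le> 0"
  proof (rule ineq_extend[where Y="X \<alpha>" and U="topspace (X \<alpha>)" and V="fst (Ta \<alpha> 0)" and G="\<lambda>_. 0"])
    show "dopen (X \<alpha>) (fst (Ta \<alpha> 0))" using Ta_dopen[OF aI B_zero[OF aI]] .
    show "\<forall>s\<in>topspace (X \<alpha>) \<inter> fst (Ta \<alpha> 0). k s \<le> 0"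
      using ek Ta_zero_pt[OF aI] \<open>e = 0\<close> by auto
    show "t \<in> topspace (X \<alpha>)" using tU oU openin_subset by blast
  qed (use kc in auto)
  then show False using kt by simp
qed

lemma T_abs_le:
  assumes "vabs x \<le> d"
  shows "sle (sabs (sminus (T x) (szero SX))) (T d)"
proof (rule sle_slices[OF Srep_sabs[OF Srep_sminus[OF T_Srep Srep_szero]] T_Srep], intro ballI)
  fix \<alpha> assume aI: "\<alpha> \<in> I"
  let ?y = "dec x \<alpha>"
  have yB: "?y \<in> B \<alpha>" using dec_in[OF aI] .
  have le: "sle (Ta \<alpha> (vabs ?y)) (Ta \<alpha> (dec d \<alpha>))"
    using Ta_mono[OF aI B_vabs[OF aI yB] dec_in[OF aI]] dec_mono[OF aI assms] dec_vabs[OF aI] by metis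
  let ?V = "fst (Ta \<alpha> ?y) \<inter> fst (Ta \<alpha> (- ?y)) \<inter> fst (Ta \<alpha> (vabs ?y)) \<inter> fst (Ta \<alpha> (dec d \<alpha>))"
  show "\<exists>V. dopen (X \<alpha>) V \<and> (\<forall>s\<in>V. (\<alpha>, s) \<in> fst (sabs (sminus (T x) (szero SX))) \<longrightarrow>
      (\<alpha>, s) \<in> fst (T d) \<longrightarrow> snd (sabs (sminus (T x) (szero SX))) (\<alpha>, s) \<le> snd (T d) (\<alpha>, s))"
  proof (rule exI[of _ ?V], safe)
    show "dopen (X \<alpha>) ?V" using aI yB by (intro dopen_Int Ta_dopen B_neg B_vabs dec_in) auto
  next
    fix s assume s: "s \<in> fst (Ta \<alpha> ?y)" "s \<in> fst (Ta \<alpha> (- ?y))" "s \<in> fst (Ta \<alpha> (vabs ?y))"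
      "s \<in> fst (Ta \<alpha> (dec d \<alpha>))" "(\<alpha>, s) \<in> fst (sabs (sminus (T x) (szero SX)))" "(\<alpha>, s) \<in> fst (T d)"
    have sx: "(\<alpha>, s) \<in> fst (T x)" using s(5) by (simp add: sabs_def sminus_def)
    have "snd (sabs (sminus (T x) (szero SX))) (\<alpha>, s) = \<bar>snd (Ta \<alpha> ?y) s\<bar>"
      using T_slice_pt[OF aI sx s(1)] by (simp add: sabs_def sminus_def szero_def)
    also have "\<dots> = snd (Ta \<alpha> (vabs ?y)) s" using Ta_vabs_pt[OF aI yB s(3,2,1)] by simp
    also have "\<dots> \<le> snd (Ta \<alpha> (dec d \<alpha>)) s" using sle_trans_pt[OF le s(3) s(4)] .
    also have "\<dots> = snd (T d) (\<alpha>, s)" using T_slice_pt[OF aI s(6) s(4)] by simp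
    finally show "snd (sabs (sminus (T x) (szero SX))) (\<alpha>, s) \<le> snd (T d) (\<alpha>, s)" .
  qed
qed

lemma evtl_mono: "evtl J r P \<Longrightarrow> (\<And>b. P b \<Longrightarrow> Q b) \<Longrightarrow> evtl J r Q"
  unfolding evtl_def by blast

lemma part1:
  assumes dir: "directed_set J r" and oc: "oconvE J r xs 0"
  shows "oconvS SX J r (\<lambda>\<beta>. T (xs \<beta>)) (szero SX)"
proof -
  have "\<exists>D. D \<subseteq> UNIV \<and> D \<noteq> {} \<and> (\<forall>d\<in>D. 0 \<le> d) \<and> (\<forall>a\<in>D. \<forall>b\<in>D. \<exists>c\<in>D. c \<le> a \<and> c \<le> b)
     \<and> (\<forall>w\<in>UNIV. (\<forall>d\<in>D. w \<le> d) \<longrightarrow> w \<le> 0)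
     \<and> (\<forall>d\<in>D. evtl J r (\<lambda>\<beta>. vabs (xs \<beta> - 0) \<le> d))"
    using oc unfolding oconvE_def oconv_gen_def .
  then obtain D where D: "D \<subseteq> UNIV \<and> D \<noteq> {} \<and> (\<forall>d\<in>D. 0 \<le> d) \<and> (\<forall>a\<in>D. \<forall>b\<in>D. \<exists>c\<in>D. c \<le> a \<and> c \<le> b)
     \<and> (\<forall>w\<in>UNIV. (\<forall>d\<in>D. w \<le> d) \<longrightarrow> w \<le> 0)
     \<and> (\<forall>d\<in>D. evtl J r (\<lambda>\<beta>. vabs (xs \<beta> - 0) \<le> d))" by (rule exE)
  have Dne: "D \<noteq> {}" and D0: "\<forall>d\<in>D. 0 \<le> d" and Ddir: "\<forall>a\<in>D. \<forall>b\<in>D. \<exists>c\<in>D. c \<le> a \<and> c \<le> b"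
    and Dinf: "\<forall>l. (\<forall>d\<in>D. l \<le> d) \<longrightarrow> l \<le> 0"
    and Dev: "\<forall>d\<in>D. evtl J r (\<lambda>\<beta>. vabs (xs \<beta> - 0) \<le> d)" using D by simp_all
  show ?thesis unfolding oconvS_def oconv_gen_def
  proof (intro exI[of _ "T ` D"] conjI)
    show "T ` D \<subseteq> Srep SX" using T_Srep by blast
    show "T ` D \<noteq> {}" using Dne by blast
    show "\<forall>d\<in>T ` D. sle (szero SX) d" using D0 T_nonneg by blast
    show "\<forall>a\<in>T ` D. \<forall>b\<in>T ` D. \<exists>c\<in>T ` D. sle c a \<and> sle c b" using Ddir T_mono by blast
    show "\<forall>w\<in>Srep SX. (\<forall>d\<in>T ` D. sle w d) \<longrightarrow> sle w (szero SX)" using OC[OF D0 Dinf] by blast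
    show "\<forall>d\<in>T ` D. evtl J r (\<lambda>\<beta>. sle (sabs (sminus (T (xs \<beta>)) (szero SX))) d)"
      using Dev T_abs_le by (auto elim!: evtl_mono)
  qed
qed

end

lemma sequiv_of_sle: "sle p q \<Longrightarrow> sle q p \<Longrightarrow> sequiv p q"
  unfolding sle_def sequiv_def by (auto intro: order_antisym)

lemma oconv_via_S:
  fixes Y :: "'x topology"
  assumes dir: "directed_set J r" and fS: "\<forall>\<beta>. f \<beta> \<in> Srep Y"
    and ne: "a0 \<in> Srep Y" "sle (szero Y) a0" "evtl J r (\<lambda>\<beta>. sle (sabs (sminus (f \<beta>) (szero Y))) a0)"
    and inf0: "\<forall>l\<in>Srep Y. (\<forall>d\<in>{d \<in> Srep Y. sle (szero Y) d \<and>
           evtl J r (\<lambda>\<beta>. sle (sabs (sminus (f \<beta>) (szero Y))) d)}. sle l d) \<longrightarrow> sle l (szero Y)"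
  shows "oconv_gen (Srep Y) sle (szero Y) (\<lambda>p q. sabs (sminus p q)) J r f (szero Y)"
  unfolding oconv_gen_def
proof (intro exI[of _ "{d \<in> Srep Y. sle (szero Y) d \<and>
           evtl J r (\<lambda>\<beta>. sle (sabs (sminus (f \<beta>) (szero Y))) d)}"] conjI)
  let ?D = "{d \<in> Srep Y. sle (szero Y) d \<and> evtl J r (\<lambda>\<beta>. sle (sabs (sminus (f \<beta>) (szero Y))) d)}"
  show "?D \<subseteq> Srep Y" by blast
  show "?D \<noteq> {}" using ne by blast
  show "\<forall>d\<in>?D. sle (szero Y) d" by blast
  show "\<forall>w\<in>Srep Y. (\<forall>d\<in>?D. sle w d) \<longrightarrow> sle w (szero Y)" using inf0 by blast
  show "\<forall>d\<in>?D. evtl J r (\<lambda>\<beta>. sle (sabs (sminus (f \<beta>) (szero Y))) d)" by blast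
  show "\<forall>a\<in>?D. \<forall>b\<in>?D. \<exists>c\<in>?D. sle c a \<and> sle c b"
  proof (intro ballI)
    fix a b assume a: "a \<in> ?D" and b: "b \<in> ?D"
    have c1: "sinf a b \<in> Srep Y" using a b Srep_sinf by blast
    have c2: "sle (szero Y) (sinf a b)" using a b unfolding sle_def sinf_def by auto
    obtain b1 where b1: "b1 \<in> J" "\<forall>\<beta>\<in>J. r b1 \<beta> \<longrightarrow> sle (sabs (sminus (f \<beta>) (szero Y))) a"
      using a unfolding evtl_def by blast
    obtain b2 where b2: "b2 \<in> J" "\<forall>\<beta>\<in>J. r b2 \<beta> \<longrightarrow> sle (sabs (sminus (f \<beta>) (szero Y))) b"
      using b unfolding evtl_def by blast
    obtain b3 where b3: "b3 \<in> J" "r b1 b3" "r b2 b3" using dir b1 b2 unfolding directed_set_def by blast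
    have c3: "evtl J r (\<lambda>\<beta>. sle (sabs (sminus (f \<beta>) (szero Y))) (sinf a b))"
      unfolding evtl_def
    proof (intro bexI[OF _ b3(1)] ballI impI)
      fix \<beta> assume "\<beta> \<in> J" "r b3 \<beta>"
      then have "r b1 \<beta>" "r b2 \<beta>" using dir b1 b2 b3 unfolding directed_set_def by blast+
      then show "sle (sabs (sminus (f \<beta>) (szero Y))) (sinf a b)"
        using b1 b2 \<open>\<beta> \<in> J\<close> unfolding sle_def sinf_def by auto
    qed
    show "\<exists>c\<in>?D. sle c a \<and> sle c b"
      by (rule bexI[of _ "sinf a b"]) (use c1 c2 c3 in \<open>auto simp: sle_def sinf_def\<close>)
  qed
qed

lemma oconv_via_E:
  fixes f :: "'b \<Rightarrow> 'e::{ordered_real_vector,lattice}"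
  assumes dir: "directed_set J r"
    and ne: "0 \<le> a0" "evtl J r (\<lambda>\<beta>. vabs (f \<beta> - 0) \<le> a0)"
    and inf0: "\<forall>l. (\<forall>d\<in>{d. 0 \<le> d \<and> evtl J r (\<lambda>\<beta>. vabs (f \<beta> - 0) \<le> d)}. l \<le> d) \<longrightarrow> l \<le> 0"
  shows "oconv_gen UNIV (\<le>) 0 (\<lambda>a b. vabs (a - b)) J r f 0"
  unfolding oconv_gen_def
proof (intro exI[of _ "{d. 0 \<le> d \<and> evtl J r (\<lambda>\<beta>. vabs (f \<beta> - 0) \<le> d)}"] conjI)
  let ?D = "{d. 0 \<le> d \<and> evtl J r (\<lambda>\<beta>. vabs (f \<beta> - 0) \<le> d)}"
  show "?D \<subseteq> UNIV" by blast
  show "?D \<noteq> {}" using ne by blast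
  show "\<forall>d\<in>?D. 0 \<le> d" by blast
  show "\<forall>w\<in>UNIV. (\<forall>d\<in>?D. w \<le> d) \<longrightarrow> w \<le> 0" using inf0 by blast
  show "\<forall>d\<in>?D. evtl J r (\<lambda>\<beta>. vabs (f \<beta> - 0) \<le> d)" by blast
  show "\<forall>a\<in>?D. \<forall>b\<in>?D. \<exists>c\<in>?D. c \<le> a \<and> c \<le> b"
  proof (intro ballI)
    fix a b assume a: "a \<in> ?D" and b: "b \<in> ?D"
    obtain b1 where b1: "b1 \<in> J" "\<forall>\<beta>\<in>J. r b1 \<beta> \<longrightarrow> vabs (f \<beta> - 0) \<le> a"
      using a unfolding evtl_def by blast
    obtain b2 where b2: "b2 \<in> J" "\<forall>\<beta>\<in>J. r b2 \<beta> \<longrightarrow> vabs (f \<beta> - 0) \<le> b"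
      using b unfolding evtl_def by blast
    obtain b3 where b3: "b3 \<in> J" "r b1 b3" "r b2 b3" using dir b1 b2 unfolding directed_set_def by blast
    have c3: "evtl J r (\<lambda>\<beta>. vabs (f \<beta> - 0) \<le> inf a b)"
      unfolding evtl_def
    proof (intro bexI[OF _ b3(1)] ballI impI)
      fix \<beta> assume "\<beta> \<in> J" "r b3 \<beta>"
      then have "r b1 \<beta>" "r b2 \<beta>" using dir b1 b2 b3 unfolding directed_set_def by blast+
      then show "vabs (f \<beta> - 0) \<le> inf a b" using b1 b2 \<open>\<beta> \<in> J\<close> by auto
    qed
    show "\<exists>c\<in>?D. c \<le> a \<and> c \<le> b"
      by (rule bexI[of _ "inf a b"]) (use a b c3 in auto)
  qed
qed

context wick begin

lemma eq_slices:
  assumes "p \<in> Srep SX" "q \<in> Srep SX"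
    "\<forall>\<alpha>\<in>I. \<exists>V. dopen (X \<alpha>) V \<and>
        (\<forall>s\<in>V. (\<alpha>, s) \<in> fst p \<longrightarrow> (\<alpha>, s) \<in> fst q \<longrightarrow> snd p (\<alpha>, s) = snd q (\<alpha>, s))"
  shows "sequiv p q"
proof (rule sequiv_of_sle)
  show "sle p q" by (rule sle_slices[OF assms(1,2)]) (use assms(3) in fastforce)
  show "sle q p" by (rule sle_slices[OF assms(2,1)]) (use assms(3) in fastforce)
qed

lemma Ta_diff_pt: "\<alpha> \<in> I \<Longrightarrow> a \<in> B \<alpha> \<Longrightarrow> b \<in> B \<alpha> \<Longrightarrow> t \<in> fst (Ta \<alpha> (a - b)) \<Longrightarrow>
   t \<in> fst (Ta \<alpha> a) \<Longrightarrow> t \<in> fst (Ta \<alpha> b) \<Longrightarrow> t \<in> fst (Ta \<alpha> (- b)) \<Longrightarrow>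
   snd (Ta \<alpha> (a - b)) t = snd (Ta \<alpha> a) t - snd (Ta \<alpha> b) t"
  using Ta_add_pt[of \<alpha> a "- b" t] Ta_neg_pt[of \<alpha> b t] B_neg[of \<alpha> b] by simp

lemma T_diff: "sequiv (T (a - b)) (sminus (T a) (T b))"
proof (rule eq_slices[OF T_Srep Srep_sminus[OF T_Srep T_Srep]], intro ballI)
  fix \<alpha> assume aI: "\<alpha> \<in> I"
  let ?V = "fst (Ta \<alpha> (dec (a - b) \<alpha>)) \<inter> fst (Ta \<alpha> (dec a \<alpha>)) \<inter> fst (Ta \<alpha> (dec b \<alpha>)) \<inter> fst (Ta \<alpha> (- dec b \<alpha>))"
  show "\<exists>V. dopen (X \<alpha>) V \<and> (\<forall>s\<in>V. (\<alpha>, s) \<in> fst (T (a - b)) \<longrightarrow> (\<alpha>, s) \<in> fst (sminus (T a) (T b)) \<longrightarrow>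
      snd (T (a - b)) (\<alpha>, s) = snd (sminus (T a) (T b)) (\<alpha>, s))"
    by (rule exI[of _ ?V])
       (use aI in \<open>auto simp: dopen_Int Ta_dopen dec_in B_neg sminus_def T_slice_pt dec_diff
          intro!: Ta_diff_pt dopen_Int Ta_dopen B_neg dec_in B_diff\<close>)
qed

lemma T_vabs: "sequiv (T (vabs a)) (sabs (T a))"
proof (rule eq_slices[OF T_Srep Srep_sabs[OF T_Srep]], intro ballI)
  fix \<alpha> assume aI: "\<alpha> \<in> I"
  let ?V = "fst (Ta \<alpha> (dec (vabs a) \<alpha>)) \<inter> fst (Ta \<alpha> (dec a \<alpha>)) \<inter> fst (Ta \<alpha> (- dec a \<alpha>))"
  show "\<exists>V. dopen (X \<alpha>) V \<and> (\<forall>s\<in>V. (\<alpha>, s) \<in> fst (T (vabs a)) \<longrightarrow> (\<alpha>, s) \<in> fst (sabs (T a)) \<longrightarrow>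
      snd (T (vabs a)) (\<alpha>, s) = snd (sabs (T a)) (\<alpha>, s))"
    by (rule exI[of _ ?V])
       (use aI in \<open>auto simp: sabs_def T_slice_pt dec_vabs
          intro!: Ta_vabs_pt dopen_Int Ta_dopen B_neg dec_in B_vabs\<close>)
qed

lemma T_inf:
  assumes "0 \<le> a" "0 \<le> b"
  shows "sequiv (T (inf a b)) (sinf (T a) (T b))"
proof (rule eq_slices[OF T_Srep Srep_sinf[OF T_Srep T_Srep]], intro ballI)
  fix \<alpha> assume aI: "\<alpha> \<in> I"
  let ?V = "fst (Ta \<alpha> (dec (inf a b) \<alpha>)) \<inter> fst (Ta \<alpha> (dec a \<alpha>)) \<inter> fst (Ta \<alpha> (dec b \<alpha>))"
  show "\<exists>V. dopen (X \<alpha>) V \<and> (\<forall>s\<in>V. (\<alpha>, s) \<in> fst (T (inf a b)) \<longrightarrow> (\<alpha>, s) \<in> fst (sinf (T a) (T b)) \<longrightarrow>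
      snd (T (inf a b)) (\<alpha>, s) = snd (sinf (T a) (T b)) (\<alpha>, s))"
    by (rule exI[of _ ?V])
       (use aI assms in \<open>auto simp: sinf_def T_slice_pt dec_inf
          intro!: Ta_inf_pt dopen_Int Ta_dopen dec_in B_inf\<close>)
qed

lemma T_diff_pt: "p \<in> fst (T (a - b)) \<Longrightarrow> p \<in> fst (T a) \<Longrightarrow> p \<in> fst (T b) \<Longrightarrow>
   snd (T (a - b)) p = snd (T a) p - snd (T b) p"
  using T_diff[of a b] unfolding sequiv_def sminus_def by auto

lemma T_vabs_pt: "p \<in> fst (T (vabs a)) \<Longrightarrow> p \<in> fst (T a) \<Longrightarrow> snd (T (vabs a)) p = \<bar>snd (T a) p\<bar>"
  using T_vabs[of a] unfolding sequiv_def sabs_def by auto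

lemma T_inf_pt: "0 \<le> a \<Longrightarrow> 0 \<le> b \<Longrightarrow> p \<in> fst (T (inf a b)) \<Longrightarrow> p \<in> fst (T a) \<Longrightarrow> p \<in> fst (T b) \<Longrightarrow>
   snd (T (inf a b)) p = min (snd (T a) p) (snd (T b) p)"
  using T_inf[of a b] unfolding sequiv_def sinf_def by auto

lemma T_mono_pt: "a \<le> b \<Longrightarrow> p \<in> fst (T a) \<Longrightarrow> p \<in> fst (T b) \<Longrightarrow> snd (T a) p \<le> snd (T b) p"
  using T_mono unfolding sle_def by auto

lemma T_nonneg_pt: "0 \<le> a \<Longrightarrow> p \<in> fst (T a) \<Longrightarrow> 0 \<le> snd (T a) p"
  using T_nonneg Srep_D(4)[OF T_Srep] unfolding sle_def szero_def by fastforce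

lemma T_zero_pt: "p \<in> fst (T 0) \<Longrightarrow> snd (T 0) p = 0"
  using T_diff_pt[of p 0 0] by simp

lemma T_dopen: "dopen SX (fst (T a))" using Srep_D(1)[OF T_Srep] .

lemma T_vn_pt: "\<alpha> \<in> I \<Longrightarrow> (\<alpha>, s) \<in> fst (T (c *\<^sub>R u \<alpha>)) \<Longrightarrow> s \<in> fst (Ta \<alpha> (c *\<^sub>R u \<alpha>)) \<Longrightarrow>
   s \<in> fst (Ta \<alpha> (u \<alpha>)) \<Longrightarrow> snd (T (c *\<^sub>R u \<alpha>)) (\<alpha>, s) = c"
proof -
  assume h: "\<alpha> \<in> I" "(\<alpha>, s) \<in> fst (T (c *\<^sub>R u \<alpha>))" "s \<in> fst (Ta \<alpha> (c *\<^sub>R u \<alpha>))" "s \<in> fst (Ta \<alpha> (u \<alpha>))"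
  have "dec (c *\<^sub>R u \<alpha>) \<alpha> = c *\<^sub>R u \<alpha>" using dec_B[OF h(1) h(1) B_scale[OF h(1) u_in[OF h(1)]]] by simp
  then show ?thesis using T_slice_pt[OF h(1) h(2)] h Ta_scale_pt[OF h(1) u_in[OF h(1)]] Ta_u_pt[OF h(1)] by simp
qed

lemma T_nonpos: "sle (T m) (szero SX) \<Longrightarrow> m \<le> 0"
proof -
  assume h: "sle (T m) (szero SX)"
  have "sle (T m) (T 0)" using h T_zero_pt Srep_D(4)[OF T_Srep] unfolding sle_def szero_def by fastforce
  then show ?thesis using T_reflect by blast
qed

lemma slice_set_open: "\<alpha> \<in> I \<Longrightarrow> openin SX (Sigma I (\<lambda>i. if i = \<alpha> then topspace (X \<alpha>) else {}))"
  unfolding openin_sum_topology by (auto split: if_splits)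

lemma pick_slice:
  assumes "openin SX Q" "(\<alpha>, s) \<in> Q" "dopen (X \<alpha>) V"
  shows "\<exists>s'. (\<alpha>, s') \<in> Q \<and> s' \<in> V"
proof -
  have aI: "\<alpha> \<in> I" using assms(1,2) openin_subset by fastforce
  have "openin (X \<alpha>) {s. (\<alpha>, s) \<in> Q}" using slice_open[OF assms(1) aI] .
  then show ?thesis using dopen_meets[OF assms(3)] assms(2) by blast
qed

end

context wick begin

lemma T_dopen_all: "dopen SX (fst (T a))" using T_dopen .

lemma key2:
  assumes v0: "0 \<le> v" and wS: "w \<in> Srep SX" and w0: "sle (szero SX) w"
    and hd: "vabs (inf (vabs (z1 - z2)) v - 0) \<le> d"
  shows "sle (sabs (sminus (sinf (sabs (sminus (T z1) (T z2))) w) (szero SX)))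
             (splus (T d) (sminus w (sinf w (T v))))"
proof (rule sle_dense)
  show "sabs (sminus (sinf (sabs (sminus (T z1) (T z2))) w) (szero SX)) \<in> Srep SX"
    by (intro Srep_sabs Srep_sminus Srep_sinf T_Srep wS Srep_szero)
  show "splus (T d) (sminus w (sinf w (T v))) \<in> Srep SX"
    by (intro Srep_splus Srep_sminus Srep_sinf T_Srep wS)
  let ?m = "inf (vabs (z1 - z2)) v"
  let ?V = "fst (T z1) \<inter> fst (T z2) \<inter> fst (T (z1 - z2)) \<inter> fst (T (vabs (z1 - z2))) \<inter> fst (T ?m)
      \<inter> fst (T v) \<inter> fst (T d)"
  show "dopen SX ?V" by (intro dopen_Int T_dopen)
  show "\<forall>t\<in>fst (sabs (sminus (sinf (sabs (sminus (T z1) (T z2))) w) (szero SX))) \<inter>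
          fst (splus (T d) (sminus w (sinf w (T v)))) \<inter> ?V.
        snd (sabs (sminus (sinf (sabs (sminus (T z1) (T z2))) w) (szero SX))) t
        \<le> snd (splus (T d) (sminus w (sinf w (T v)))) t"
  proof
    fix t assume t: "t \<in> fst (sabs (sminus (sinf (sabs (sminus (T z1) (T z2))) w) (szero SX))) \<inter>
          fst (splus (T d) (sminus w (sinf w (T v)))) \<inter> ?V"
    have tw: "t \<in> fst w" and ttop: "t \<in> topspace SX" using t
      by (auto simp: sabs_def sminus_def sinf_def szero_def)
    have tV: "t \<in> fst (T z1)" "t \<in> fst (T z2)" "t \<in> fst (T (z1 - z2))" "t \<in> fst (T (vabs (z1 - z2)))"
      "t \<in> fst (T ?m)" "t \<in> fst (T v)" "t \<in> fst (T d)" using t by auto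
    define A where "A = \<bar>snd (T z1) t - snd (T z2) t\<bar>"
    define N where "N = snd (T v) t"
    define W where "W = snd w t"
    have W0: "0 \<le> W" using w0 tw ttop unfolding sle_def szero_def W_def by auto
    have A0: "0 \<le> A" unfolding A_def by simp
    have "A = snd (T (vabs (z1 - z2))) t"
      unfolding A_def using T_vabs_pt[OF tV(4) tV(3)] T_diff_pt[OF tV(3) tV(1) tV(2)] by simp
    then have mA: "min A N = snd (T ?m) t"
      unfolding N_def using T_inf_pt[OF vabs_ge0 v0 tV(5) tV(4) tV(6)] by simp
    have m0: "0 \<le> ?m" using vabs_ge0 v0 by simp
    have "?m \<le> d" using hd vabs_of_nonneg[OF m0] by simp
    then have md: "snd (T ?m) t \<le> snd (T d) t" using T_mono_pt tV(5,7) by blast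
    have real: "min A W \<le> min A N + (W - min W N)" by (auto simp: min_def)
    have lhs: "snd (sabs (sminus (sinf (sabs (sminus (T z1) (T z2))) w) (szero SX))) t = min A W"
      using A0 W0 unfolding A_def W_def by (simp add: sabs_def sminus_def sinf_def szero_def)
    have rhs: "snd (splus (T d) (sminus w (sinf w (T v)))) t = snd (T d) t + (W - min W N)"
      unfolding W_def N_def by (simp add: splus_def sminus_def sinf_def)
    show "snd (sabs (sminus (sinf (sabs (sminus (T z1) (T z2))) w) (szero SX))) t
        \<le> snd (splus (T d) (sminus w (sinf w (T v)))) t"
      unfolding lhs rhs using real mA md by linarith
  qed
qed

lemma uoE_D:
  assumes "uoconvE J r xs x" "0 \<le> v"
  obtains D where "\<forall>d\<in>D. 0 \<le> d" "\<forall>l. (\<forall>d\<in>D. l \<le> d) \<longrightarrow> l \<le> 0"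
    "\<forall>d\<in>D. evtl J r (\<lambda>\<beta>. vabs (inf (vabs (xs \<beta> - x)) v - 0) \<le> d)"
proof -
  have "oconv_gen UNIV (\<le>) 0 (\<lambda>a b. vabs (a - b)) J r (\<lambda>\<beta>. inf (vabs (xs \<beta> - x)) v) 0"
    using assms unfolding uoconvE_def uoconv_gen_def by simp
  then have "\<exists>D. D \<subseteq> UNIV \<and> D \<noteq> {} \<and> (\<forall>d\<in>D. 0 \<le> d) \<and> (\<forall>a\<in>D. \<forall>b\<in>D. \<exists>c\<in>D. c \<le> a \<and> c \<le> b)
     \<and> (\<forall>w\<in>UNIV. (\<forall>d\<in>D. w \<le> d) \<longrightarrow> w \<le> 0)
     \<and> (\<forall>d\<in>D. evtl J r (\<lambda>\<beta>. vabs (inf (vabs (xs \<beta> - x)) v - 0) \<le> d))"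
    unfolding oconv_gen_def .
  then obtain D where D: "D \<subseteq> UNIV \<and> D \<noteq> {} \<and> (\<forall>d\<in>D. 0 \<le> d) \<and> (\<forall>a\<in>D. \<forall>b\<in>D. \<exists>c\<in>D. c \<le> a \<and> c \<le> b)
     \<and> (\<forall>w\<in>UNIV. (\<forall>d\<in>D. w \<le> d) \<longrightarrow> w \<le> 0)
     \<and> (\<forall>d\<in>D. evtl J r (\<lambda>\<beta>. vabs (inf (vabs (xs \<beta> - x)) v - 0) \<le> d))" by (rule exE)
  show ?thesis by (rule that[of D]) (use D in simp_all)
qed

lemma part2:
  assumes dir: "directed_set J r" and uo: "uoconvE J r xs x"
  shows "uoconvS SX J r (\<lambda>\<beta>. T (xs \<beta>)) (T x)"
  unfolding uoconvS_def uoconv_gen_def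
proof (intro ballI impI)
  fix w assume wS: "w \<in> Srep SX" and w0: "sle (szero SX) w"
  let ?f = "\<lambda>\<beta>. sinf (sabs (sminus (T (xs \<beta>)) (T x))) w"
  have fS: "\<forall>\<beta>. ?f \<beta> \<in> Srep SX" by (intro allI Srep_sinf Srep_sabs Srep_sminus T_Srep wS)
  show "oconv_gen (Srep SX) sle (szero SX) (\<lambda>p q. sabs (sminus p q)) J r ?f (szero SX)"
  proof (rule oconv_via_S[OF dir fS wS w0])
    obtain b0 where b0: "b0 \<in> J" using dir unfolding directed_set_def by blast
    have "sle (sabs (sminus (?f \<beta>) (szero SX))) w" for \<beta>
      unfolding sle_def
    proof
      fix t assume t: "t \<in> fst (sabs (sminus (?f \<beta>) (szero SX))) \<inter> fst w"
      have "0 \<le> snd w t" using w0 t unfolding sle_def szero_def by (auto simp: sabs_def sminus_def sinf_def)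
      then show "snd (sabs (sminus (?f \<beta>) (szero SX))) t \<le> snd w t"
        by (simp add: sabs_def sminus_def sinf_def szero_def)
    qed
    then show "evtl J r (\<lambda>\<beta>. sle (sabs (sminus (?f \<beta>) (szero SX))) w)"
      unfolding evtl_def using b0 by blast
  next
    show "\<forall>l\<in>Srep SX. (\<forall>d\<in>{d \<in> Srep SX. sle (szero SX) d \<and>
           evtl J r (\<lambda>\<beta>. sle (sabs (sminus (?f \<beta>) (szero SX))) d)}. sle l d) \<longrightarrow> sle l (szero SX)"
    proof (intro ballI impI)
      fix l assume lS: "l \<in> Srep SX" and lb: "\<forall>d\<in>{d \<in> Srep SX. sle (szero SX) d \<and>
           evtl J r (\<lambda>\<beta>. sle (sabs (sminus (?f \<beta>) (szero SX))) d)}. sle l d"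
      have key: "snd l t \<le> snd w t - min (snd w t) (snd (T (real n *\<^sub>R u \<alpha>)) t)"
        if aI: "\<alpha> \<in> I" and tt: "t \<in> fst l" "t \<in> fst w" "t \<in> fst (T (real n *\<^sub>R u \<alpha>))" for \<alpha> n t
      proof -
        define v where "v = real n *\<^sub>R u \<alpha>"
        have v0: "0 \<le> v" unfolding v_def using u_nonneg[OF aI] by (intro scaleR_nonneg_nonneg) simp_all
        define c where "c = sminus w (sinf w (T v))"
        have cS: "c \<in> Srep SX" unfolding c_def by (intro Srep_sminus Srep_sinf wS T_Srep)
        obtain D where D0: "\<forall>d\<in>D. 0 \<le> d" and Dinf: "\<forall>l. (\<forall>d\<in>D. l \<le> d) \<longrightarrow> l \<le> 0"
          and Dev: "\<forall>d\<in>D. evtl J r (\<lambda>\<beta>. vabs (inf (vabs (xs \<beta> - x)) v - 0) \<le> d)"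
          using uoE_D[OF uo v0] by blast
        have "\<forall>d\<in>D. sle (sminus l c) (T d)"
        proof
          fix d assume dD: "d \<in> D"
          let ?a = "splus (T d) c"
          have aS: "?a \<in> Srep SX" by (intro Srep_splus T_Srep cS)
          have a0: "sle (szero SX) ?a"
            unfolding sle_def
          proof
            fix q assume q: "q \<in> fst (szero SX) \<inter> fst ?a"
            have "0 \<le> snd (T d) q" using T_nonneg_pt D0 dD q by (auto simp: splus_def)
            then show "snd (szero SX) q \<le> snd ?a q"
              by (simp add: szero_def splus_def c_def sminus_def sinf_def)
          qed
          have aev: "evtl J r (\<lambda>\<beta>. sle (sabs (sminus (?f \<beta>) (szero SX))) ?a)"
            using Dev dD key2[OF v0 wS w0] unfolding c_def by (auto elim!: evtl_mono)
          have "sle l ?a" using lb aS a0 aev by blast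
          then have hh: "\<forall>q\<in>fst l \<inter> (fst (T d) \<inter> fst c). snd l q \<le> snd (T d) q + snd c q"
            unfolding sle_def by (simp add: splus_def)
          show "sle (sminus l c) (T d)"
            unfolding sle_def
          proof
            fix q assume q: "q \<in> fst (sminus l c) \<inter> fst (T d)"
            then have "snd l q \<le> snd (T d) q + snd c q" using hh by (auto simp: sminus_def)
            then show "snd (sminus l c) q \<le> snd (T d) q" by (simp add: sminus_def)
          qed
        qed
        then have "sle (sminus l c) (szero SX)"
          using OC[OF D0 Dinf Srep_sminus[OF lS cS]] by blast
        moreover have "t \<in> topspace SX" using tt(1) Srep_D(4)[OF lS] by blast
        ultimately show ?thesis using tt unfolding sle_def c_def v_def
          by (auto simp: sminus_def sinf_def szero_def)
      qed
      show "sle l (szero SX)"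
      proof (rule ccontr)
        assume "\<not> sle l (szero SX)"
        then obtain p where p: "p \<in> fst l" "0 < snd l p"
          unfolding sle_def szero_def by (auto simp: not_le)
        obtain \<alpha> s0 where ps: "p = (\<alpha>, s0)" by (cases p)
        have aI: "\<alpha> \<in> I" using p(1) Srep_D(4)[OF lS] ps by auto
        define S\<alpha> where "S\<alpha> = Sigma I (\<lambda>i. if i = \<alpha> then topspace (X \<alpha>) else {})"
        have oS: "openin SX S\<alpha>" unfolding S\<alpha>_def using slice_set_open[OF aI] .
        have pS: "p \<in> S\<alpha>" using p(1) Srep_D(4)[OF lS] ps aI unfolding S\<alpha>_def by auto
        define Q1 where "Q1 = {q \<in> fst l. 0 < snd l q} \<inter> S\<alpha>"
        have oQ1: "openin SX Q1" unfolding Q1_def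
          by (intro openin_Int oS openin_pos_set Srep_D(3)[OF lS] Srep_D(2)[OF lS])
        have "p \<in> Q1" using p pS unfolding Q1_def by auto
        then obtain p1 where p1: "p1 \<in> Q1" "p1 \<in> fst w"
          using dopen_meets[OF Srep_D(1)[OF wS] oQ1] by blast
        define n where "n = nat \<lceil>snd w p1\<rceil> + 1"
        have wn: "snd w p1 < real n" unfolding n_def by linarith
        define Q2 where "Q2 = {q \<in> fst l \<inter> fst w. 0 < min (snd l q) (real n - snd w q)} \<inter> S\<alpha>"
        have oQ2: "openin SX Q2" unfolding Q2_def
        proof (rule openin_Int[OF _ oS], rule openin_pos_set)
          show "openin SX (fst l \<inter> fst w)" using Srep_D(3)[OF lS] Srep_D(3)[OF wS] by blast
          show "continuous_map (subtopology SX (fst l \<inter> fst w)) euclideanreal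
              (\<lambda>q. min (snd l q) (real n - snd w q))"
            by (intro continuous_map_real_min continuous_map_diff Srep_cont_sub[OF lS] Srep_cont_sub[OF wS])
               auto
        qed
        have "p1 \<in> Q2" using p1 wn unfolding Q1_def Q2_def by auto
        let ?v = "real n *\<^sub>R u \<alpha>"
        have oQ3: "openin SX (Q2 \<inter> fst (T ?v))" using oQ2 Srep_D(3)[OF T_Srep] by blast
        obtain p2 where p2: "p2 \<in> Q2" "p2 \<in> fst (T ?v)"
          using dopen_meets[OF T_dopen oQ2] \<open>p1 \<in> Q2\<close> by blast
        obtain a2 s2 where p2s: "p2 = (a2, s2)" by (cases p2)
        have "a2 = \<alpha>" using p2(1) unfolding Q2_def S\<alpha>_def p2s by (auto split: if_splits)
        then have "(\<alpha>, s2) \<in> Q2 \<inter> fst (T ?v)" using p2 p2s by simp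
        moreover have "dopen (X \<alpha>) (fst (Ta \<alpha> ?v) \<inter> fst (Ta \<alpha> (u \<alpha>)))"
          using aI u_in B_scale by (intro dopen_Int Ta_dopen) auto
        ultimately obtain s3 where s3: "(\<alpha>, s3) \<in> Q2 \<inter> fst (T ?v)" "s3 \<in> fst (Ta \<alpha> ?v) \<inter> fst (Ta \<alpha> (u \<alpha>))"
          using pick_slice[OF oQ3] by blast
        have Tv: "snd (T ?v) (\<alpha>, s3) = real n" using T_vn_pt[OF aI] s3 by auto
        have q: "(\<alpha>, s3) \<in> fst l" "(\<alpha>, s3) \<in> fst w" "0 < snd l (\<alpha>, s3)" "snd w (\<alpha>, s3) < real n"
          using s3(1) unfolding Q2_def by auto
        have "snd l (\<alpha>, s3) \<le> snd w (\<alpha>, s3) - min (snd w (\<alpha>, s3)) (snd (T ?v) (\<alpha>, s3))"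
          using key[OF aI q(1,2)] s3(1) by blast
        then show False using q Tv by simp
      qed
    qed
  qed
qed

end

context wick begin

lemma uoS_D:
  assumes "uoconvS SX J r (\<lambda>\<beta>. T (xs \<beta>)) (T x)" "0 \<le> v"
  obtains D where "\<forall>d\<in>D. d \<in> Srep SX" "\<forall>d\<in>D. sle (szero SX) d"
    "\<forall>w\<in>Srep SX. (\<forall>d\<in>D. sle w d) \<longrightarrow> sle w (szero SX)"
    "\<forall>d\<in>D. evtl J r (\<lambda>\<beta>. sle (sabs (sminus (sinf (sabs (sminus (T (xs \<beta>)) (T x))) (T v)) (szero SX))) d)"
proof -
  have "T v \<in> Srep SX" "sle (szero SX) (T v)" using T_Srep T_nonneg[OF assms(2)] by auto
  then have "oconv_gen (Srep SX) sle (szero SX) (\<lambda>p q. sabs (sminus p q)) J r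
      (\<lambda>\<beta>. sinf (sabs (sminus (T (xs \<beta>)) (T x))) (T v)) (szero SX)"
    using assms(1) unfolding uoconvS_def uoconv_gen_def by blast
  then have "\<exists>D. D \<subseteq> Srep SX \<and> D \<noteq> {} \<and> (\<forall>d\<in>D. sle (szero SX) d)
        \<and> (\<forall>a\<in>D. \<forall>b\<in>D. \<exists>c\<in>D. sle c a \<and> sle c b)
        \<and> (\<forall>w\<in>Srep SX. (\<forall>d\<in>D. sle w d) \<longrightarrow> sle w (szero SX))
        \<and> (\<forall>d\<in>D. evtl J r (\<lambda>\<beta>. sle (sabs (sminus (sinf (sabs (sminus (T (xs \<beta>)) (T x))) (T v)) (szero SX))) d))"
    unfolding oconv_gen_def .
  then obtain D where D: "D \<subseteq> Srep SX \<and> D \<noteq> {} \<and> (\<forall>d\<in>D. sle (szero SX) d)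
        \<and> (\<forall>a\<in>D. \<forall>b\<in>D. \<exists>c\<in>D. sle c a \<and> sle c b)
        \<and> (\<forall>w\<in>Srep SX. (\<forall>d\<in>D. sle w d) \<longrightarrow> sle w (szero SX))
        \<and> (\<forall>d\<in>D. evtl J r (\<lambda>\<beta>. sle (sabs (sminus (sinf (sabs (sminus (T (xs \<beta>)) (T x))) (T v)) (szero SX))) d))"
    by (rule exE)
  show ?thesis by (rule that[of D]) (use D in auto)
qed

lemma part3_claim:
  assumes v0: "0 \<le> v" and m0: "0 \<le> m" and mv: "m \<le> v"
    and d'S: "d' \<in> Srep SX" and d'0: "sle (szero SX) d'"
    and d'ev: "evtl J r (\<lambda>\<beta>. sle (sabs (sminus (sinf (sabs (sminus (T (xs \<beta>)) (T x))) (T v)) (szero SX))) d')"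
    and mlb: "\<And>e. 0 \<le> e \<Longrightarrow> evtl J r (\<lambda>\<beta>. vabs (inf (vabs (xs \<beta> - x)) v - 0) \<le> e) \<Longrightarrow> m \<le> e"
  shows "sle (T m) d'"
proof (rule ccontr)
  assume "\<not> sle (T m) d'"
  then obtain p where p: "p \<in> fst (T m)" "p \<in> fst d'" "snd d' p < snd (T m) p"
    unfolding sle_def by (auto simp: not_le)
  obtain \<alpha> t1 where ps: "p = (\<alpha>, t1)" by (cases p)
  have aI: "\<alpha> \<in> I" using p(1) Srep_D(4)[OF T_Srep] ps by auto
  define S\<alpha> where "S\<alpha> = Sigma I (\<lambda>i. if i = \<alpha> then topspace (X \<alpha>) else {})"
  have oS: "openin SX S\<alpha>" unfolding S\<alpha>_def using slice_set_open[OF aI] .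
  have "p \<in> topspace SX" using p(1) Srep_D(4)[OF T_Srep[of m]] by blast
  then have pS: "p \<in> S\<alpha>" using ps aI unfolding S\<alpha>_def by auto
  define Q1 where "Q1 = {q \<in> fst (T m) \<inter> fst d'. 0 < snd (T m) q - snd d' q} \<inter> S\<alpha>"
  have oQ1: "openin SX Q1" unfolding Q1_def
  proof (rule openin_Int[OF _ oS], rule openin_pos_set)
    show "openin SX (fst (T m) \<inter> fst d')" using Srep_D(3)[OF T_Srep] Srep_D(3)[OF d'S] by blast
    show "continuous_map (subtopology SX (fst (T m) \<inter> fst d')) euclideanreal (\<lambda>q. snd (T m) q - snd d' q)"
      by (intro continuous_map_diff Srep_cont_sub[OF T_Srep] Srep_cont_sub[OF d'S]) auto
  qed
  have "p \<in> Q1" using p pS unfolding Q1_def by auto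
  then obtain p2 where p2: "p2 \<in> Q1" "p2 \<in> fst (T v)"
    using dopen_meets[OF T_dopen oQ1] by blast
  obtain a2 t0 where p2s: "p2 = (a2, t0)" by (cases p2)
  have "a2 = \<alpha>" using p2(1) unfolding Q1_def S\<alpha>_def p2s by (auto split: if_splits)
  then have p2': "(\<alpha>, t0) \<in> Q1" "(\<alpha>, t0) \<in> fst (T v)" using p2 p2s by auto
  define U0 where "U0 = {s. (\<alpha>, s) \<in> fst (T m) \<inter> fst d' \<inter> fst (T v)}"
  have oU0: "openin (X \<alpha>) U0" unfolding U0_def
    by (rule slice_open[OF _ aI]) (intro openin_Int Srep_D(3)[OF T_Srep] Srep_D(3)[OF d'S])
  have U0sub: "U0 \<subseteq> {s. (\<alpha>, s) \<in> fst (T m)}" "U0 \<subseteq> {s. (\<alpha>, s) \<in> fst d'}" "U0 \<subseteq> {s. (\<alpha>, s) \<in> fst (T v)}"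
    unfolding U0_def by auto
  define U where "U = {s \<in> U0. 0 < snd (T m) (\<alpha>, s) - snd d' (\<alpha>, s)}"
  have oU: "openin (X \<alpha>) U" unfolding U_def
    by (rule openin_pos_set[OF oU0])
       (intro continuous_map_diff slice_cont[OF T_Srep aI U0sub(1)] slice_cont[OF d'S aI U0sub(2)])
  have Usub: "U \<subseteq> U0" unfolding U_def by auto
  have t0U: "t0 \<in> U" using p2' unfolding U_def U0_def Q1_def by auto
  define hf where "hf = (\<lambda>s. snd (T v) (\<alpha>, s) - min (snd d' (\<alpha>, s)) (snd (T v) (\<alpha>, s)))"
  have hc: "continuous_map (subtopology (X \<alpha>) U) euclideanreal hf" unfolding hf_def
    using Usub U0sub by (intro continuous_map_diff continuous_map_real_min slice_cont[OF T_Srep aI]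
        slice_cont[OF d'S aI]) auto
  have h0: "\<forall>s\<in>U. 0 \<le> hf s" unfolding hf_def by simp
  define \<eta> where "\<eta> = snd (T m) (\<alpha>, t0) - snd d' (\<alpha>, t0)"
  have eta: "0 < \<eta>" using t0U unfolding U_def \<eta>_def by auto
  obtain f k where fB: "f \<in> B \<alpha>" and f0: "0 \<le> f" and kc: "continuous_map (X \<alpha>) euclideanreal k"
    and k0: "\<forall>s\<in>topspace (X \<alpha>). 0 \<le> k s" and kU: "\<forall>s\<in>U. k s \<le> hf s"
    and kout: "\<forall>s\<in>topspace (X \<alpha>) - U. k s = 0" and fk: "\<forall>s\<in>fst (Ta \<alpha> f). snd (Ta \<alpha> f) s = k s"
    and kt0: "hf t0 - \<eta> < k t0"
    using density[OF aI oU hc h0 t0U eta] by blast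
  have Utop: "U \<subseteq> topspace (X \<alpha>)" using oU openin_subset by blast
  have decf: "dec f \<beta> = (if \<beta> = \<alpha> then f else 0)" if "\<beta> \<in> I" for \<beta>
    using dec_B[OF aI that fB] .
  have vB: "dec v \<alpha> \<in> B \<alpha>" using dec_in[OF aI] .
  have vn: "0 \<le> dec v \<alpha>" using dec_nonneg[OF aI v0] .
  have d'nn: "0 \<le> snd d' q" if "q \<in> fst d'" for q
    using d'0 that Srep_D(4)[OF d'S] unfolding sle_def szero_def by auto
  have fv_a: "f \<le> dec v \<alpha>"
  proof (rule Ta_reflect[OF aI fB vB])
    show "sle (Ta \<alpha> f) (Ta \<alpha> (dec v \<alpha>))"
    proof (rule sle_dense[OF Ta_Srep[OF aI fB] Ta_Srep[OF aI vB] T_dopen_slice[OF aI, of v]], safe)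
      fix s assume s: "s \<in> fst (Ta \<alpha> f)" "s \<in> fst (Ta \<alpha> (dec v \<alpha>))" "(\<alpha>, s) \<in> fst (T v)"
      have stop: "s \<in> topspace (X \<alpha>)" using s(1) Srep_D(4)[OF Ta_Srep[OF aI fB]] by blast
      have Tv: "snd (T v) (\<alpha>, s) = snd (Ta \<alpha> (dec v \<alpha>)) s" using T_slice_pt[OF aI s(3) s(2)] .
      show "snd (Ta \<alpha> f) s \<le> snd (Ta \<alpha> (dec v \<alpha>)) s"
      proof (cases "s \<in> U")
        case True
        have "snd d' (\<alpha>, s) \<ge> 0" using d'nn True Usub U0sub by blast
        moreover have "snd (T v) (\<alpha>, s) \<ge> 0" using T_nonneg_pt[OF v0 s(3)] .
        ultimately have "hf s \<le> snd (T v) (\<alpha>, s)" unfolding hf_def by simp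
        then show ?thesis using fk kU s(1) True Tv by fastforce
      next
        case False
        then show ?thesis using fk kout s(1) stop Ta_nonneg_pt[OF aI vB vn s(2)] by simp
      qed
    qed
  qed
  have fv: "f \<le> v"
  proof (rule dec_reflect, intro ballI)
    fix \<beta> assume bI: "\<beta> \<in> I"
    show "dec f \<beta> \<le> dec v \<beta>"
      using decf[OF bI] fv_a dec_nonneg[OF bI v0] by (cases "\<beta> = \<alpha>") auto
  qed
  have ev: "evtl J r (\<lambda>\<beta>. vabs (inf (vabs (xs \<beta> - x)) v - 0) \<le> v - f)"
  proof (rule evtl_mono[OF d'ev])
    fix \<beta>
    assume hb: "sle (sabs (sminus (sinf (sabs (sminus (T (xs \<beta>)) (T x))) (T v)) (szero SX))) d'"
    define z where "z = xs \<beta> - x"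
    define mm where "mm = inf (vabs z) v"
    have mm0: "0 \<le> mm" unfolding mm_def using vabs_ge0 v0 by simp
    have mmv: "mm \<le> v" unfolding mm_def by simp
    have "mm \<le> v - f"
    proof (rule dec_reflect, intro ballI)
      fix \<beta>' assume bI: "\<beta>' \<in> I"
      show "dec mm \<beta>' \<le> dec (v - f) \<beta>'"
      proof (cases "\<beta>' = \<alpha>")
        case False
        then show ?thesis using dec_diff[OF bI, of v f] decf[OF bI] dec_mono[OF bI mmv] by simp
      next
        case True
        have mB: "dec mm \<alpha> \<in> B \<alpha>" using dec_in[OF aI] .
        have vfB: "dec v \<alpha> - f \<in> B \<alpha>" using B_diff[OF aI vB fB] .
        have "dec mm \<alpha> \<le> dec v \<alpha> - f"
        proof (rule Ta_reflect[OF aI mB vfB])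
          let ?G = "fst (T mm) \<inter> fst (T (vabs z)) \<inter> fst (T z) \<inter> fst (T (xs \<beta>)) \<inter> fst (T x) \<inter> fst (T v)"
          let ?V = "{s. (\<alpha>, s) \<in> ?G} \<inter> fst (Ta \<alpha> (dec v \<alpha>)) \<inter> fst (Ta \<alpha> f) \<inter> fst (Ta \<alpha> (- f))"
          have dV: "dopen (X \<alpha>) ?V"
            by (intro dopen_Int slice_dopen[OF _ aI] T_dopen Ta_dopen[OF aI] vB fB B_neg[OF aI fB])
          show "sle (Ta \<alpha> (dec mm \<alpha>)) (Ta \<alpha> (dec v \<alpha> - f))"
          proof (rule sle_dense[OF Ta_Srep[OF aI mB] Ta_Srep[OF aI vfB] dV], intro ballI)
            fix s assume s: "s \<in> fst (Ta \<alpha> (dec mm \<alpha>)) \<inter> fst (Ta \<alpha> (dec v \<alpha> - f)) \<inter> ?V"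
            have stop: "s \<in> topspace (X \<alpha>)" using s Srep_D(4)[OF Ta_Srep[OF aI mB]] by blast
            have sG: "(\<alpha>, s) \<in> fst (T mm)" "(\<alpha>, s) \<in> fst (T (vabs z))" "(\<alpha>, s) \<in> fst (T z)"
              "(\<alpha>, s) \<in> fst (T (xs \<beta>))" "(\<alpha>, s) \<in> fst (T x)" "(\<alpha>, s) \<in> fst (T v)" using s by auto
            define F where "F = min \<bar>snd (T (xs \<beta>)) (\<alpha>, s) - snd (T x) (\<alpha>, s)\<bar> (snd (T v) (\<alpha>, s))"
            have "snd (Ta \<alpha> (dec mm \<alpha>)) s = snd (T mm) (\<alpha>, s)" using T_slice_pt[OF aI sG(1)] s by simp
            also have "\<dots> = min (snd (T (vabs z)) (\<alpha>, s)) (snd (T v) (\<alpha>, s))"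
              unfolding mm_def using T_inf_pt[OF vabs_ge0 v0] sG unfolding mm_def by simp
            also have "\<dots> = F" unfolding F_def
              using T_vabs_pt[OF sG(2) sG(3)] T_diff_pt[of "(\<alpha>, s)" "xs \<beta>" x] sG unfolding z_def by simp
            finally have lhs: "snd (Ta \<alpha> (dec mm \<alpha>)) s = F" .
            have "snd (Ta \<alpha> (dec v \<alpha> - f)) s = snd (Ta \<alpha> (dec v \<alpha>)) s - snd (Ta \<alpha> f) s"
              using Ta_diff_pt[OF aI vB fB] s by auto
            also have "\<dots> = snd (T v) (\<alpha>, s) - k s" using T_slice_pt[OF aI sG(6)] fk s by auto
            finally have rhs: "snd (Ta \<alpha> (dec v \<alpha> - f)) s = snd (T v) (\<alpha>, s) - k s" .
            have FTv: "F \<le> snd (T v) (\<alpha>, s)" unfolding F_def by simp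
            show "snd (Ta \<alpha> (dec mm \<alpha>)) s \<le> snd (Ta \<alpha> (dec v \<alpha> - f)) s"
            proof (cases "s \<in> U")
              case True
              have sd': "(\<alpha>, s) \<in> fst d'" using True Usub U0sub by blast
              have stop': "(\<alpha>, s) \<in> topspace SX" using aI stop by simp
              have "snd (sabs (sminus (sinf (sabs (sminus (T (xs \<beta>)) (T x))) (T v)) (szero SX))) (\<alpha>, s)
                   \<le> snd d' (\<alpha>, s)"
                using hb sG sd' stop' unfolding sle_def by (auto simp: sabs_def sminus_def sinf_def szero_def)
              moreover have "0 \<le> F" unfolding F_def using T_nonneg_pt[OF v0 sG(6)] by simp
              ultimately have "F \<le> snd d' (\<alpha>, s)"
                unfolding F_def by (simp add: sabs_def sminus_def sinf_def szero_def)
              then have "F \<le> snd (T v) (\<alpha>, s) - hf s" using FTv unfolding hf_def by simp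
              then show ?thesis using lhs rhs kU True by fastforce
            next
              case False
              then show ?thesis using lhs rhs kout stop FTv by simp
            qed
          qed
        qed
        then show ?thesis using True dec_diff[OF aI, of v f] decf[OF aI] by simp
      qed
    qed
    then show "vabs (inf (vabs (xs \<beta> - x)) v - 0) \<le> v - f"
      using vabs_of_nonneg[OF mm0] unfolding mm_def z_def by simp
  qed
  have "m \<le> v - f" using mlb[OF _ ev] fv by simp
  then have "dec m \<alpha> \<le> dec v \<alpha> - f" using dec_mono[OF aI] dec_diff[OF aI, of v f] decf[OF aI] by fastforce
  then have mle: "sle (Ta \<alpha> (dec m \<alpha>)) (Ta \<alpha> (dec v \<alpha> - f))"
    using Ta_mono[OF aI dec_in[OF aI] B_diff[OF aI vB fB]] by blast
  have "k t0 \<le> snd (T v) (\<alpha>, t0) - snd (T m) (\<alpha>, t0)"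
  proof (rule ineq_extend[OF oU _ _ _ _ t0U, where
        V = "fst (Ta \<alpha> (dec m \<alpha>)) \<inter> fst (Ta \<alpha> (dec v \<alpha> - f)) \<inter> fst (Ta \<alpha> (dec v \<alpha>)) \<inter> fst (Ta \<alpha> f) \<inter> fst (Ta \<alpha> (- f))"])
    show "continuous_map (subtopology (X \<alpha>) U) euclideanreal k"
      using kc continuous_map_from_subtopology by blast
    show "continuous_map (subtopology (X \<alpha>) U) euclideanreal (\<lambda>s. snd (T v) (\<alpha>, s) - snd (T m) (\<alpha>, s))"
      using Usub U0sub by (intro continuous_map_diff slice_cont[OF T_Srep aI]) auto
    show "dopen (X \<alpha>) (fst (Ta \<alpha> (dec m \<alpha>)) \<inter> fst (Ta \<alpha> (dec v \<alpha> - f)) \<inter> fst (Ta \<alpha> (dec v \<alpha>))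
        \<inter> fst (Ta \<alpha> f) \<inter> fst (Ta \<alpha> (- f)))"
      by (intro dopen_Int Ta_dopen[OF aI] dec_in[OF aI] B_diff[OF aI vB fB] vB fB B_neg[OF aI fB])
    show "\<forall>s\<in>U \<inter> (fst (Ta \<alpha> (dec m \<alpha>)) \<inter> fst (Ta \<alpha> (dec v \<alpha> - f)) \<inter> fst (Ta \<alpha> (dec v \<alpha>))
        \<inter> fst (Ta \<alpha> f) \<inter> fst (Ta \<alpha> (- f))). k s \<le> snd (T v) (\<alpha>, s) - snd (T m) (\<alpha>, s)"
    proof
      fix s assume s: "s \<in> U \<inter> (fst (Ta \<alpha> (dec m \<alpha>)) \<inter> fst (Ta \<alpha> (dec v \<alpha> - f)) \<inter> fst (Ta \<alpha> (dec v \<alpha>))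
        \<inter> fst (Ta \<alpha> f) \<inter> fst (Ta \<alpha> (- f)))"
      have sm: "(\<alpha>, s) \<in> fst (T m)" and sv: "(\<alpha>, s) \<in> fst (T v)" using s Usub U0sub by auto
      have 1: "snd (Ta \<alpha> (dec m \<alpha>)) s \<le> snd (Ta \<alpha> (dec v \<alpha> - f)) s" using mle s unfolding sle_def by auto
      have 2: "snd (Ta \<alpha> (dec v \<alpha> - f)) s = snd (Ta \<alpha> (dec v \<alpha>)) s - snd (Ta \<alpha> f) s"
        using Ta_diff_pt[OF aI vB fB] s by auto
      have 3: "snd (T v) (\<alpha>, s) = snd (Ta \<alpha> (dec v \<alpha>)) s" using T_slice_pt[OF aI sv] s by auto
      have 4: "snd (T m) (\<alpha>, s) = snd (Ta \<alpha> (dec m \<alpha>)) s" using T_slice_pt[OF aI sm] s by auto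
      have 5: "snd (Ta \<alpha> f) s = k s" using fk s by auto
      show "k s \<le> snd (T v) (\<alpha>, s) - snd (T m) (\<alpha>, s)" using 1 2 3 4 5 by simp
    qed
  qed
  moreover have "snd (T m) (\<alpha>, t0) \<le> snd (T v) (\<alpha>, t0)"
    using T_mono_pt[OF mv] t0U Usub U0sub by blast
  moreover have "snd d' (\<alpha>, t0) < snd (T m) (\<alpha>, t0)" using t0U unfolding U_def by simp
  ultimately show False using kt0 unfolding hf_def \<eta>_def by simp
qed

lemma part3:
  assumes dir: "directed_set J r" and uo: "uoconvS SX J r (\<lambda>\<beta>. T (xs \<beta>)) (T x)"
  shows "uoconvE J r xs x"
  unfolding uoconvE_def uoconv_gen_def
proof (intro ballI impI)
  fix v :: 'e assume v0: "0 \<le> v"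
  show "oconv_gen UNIV (\<le>) 0 (\<lambda>a b. vabs (a - b)) J r (\<lambda>\<beta>. inf (vabs (xs \<beta> - x)) v) 0"
  proof (rule oconv_via_E[OF dir v0])
    obtain b0 where b0: "b0 \<in> J" using dir unfolding directed_set_def by blast
    have "vabs (inf (vabs (xs \<beta> - x)) v - 0) \<le> v" for \<beta>
    proof -
      have "0 \<le> inf (vabs (xs \<beta> - x)) v" using vabs_ge0 v0 by simp
      then show ?thesis using vabs_of_nonneg[of "inf (vabs (xs \<beta> - x)) v"] by simp
    qed
    then show "evtl J r (\<lambda>\<beta>. vabs (inf (vabs (xs \<beta> - x)) v - 0) \<le> v)"
      unfolding evtl_def using b0 by blast
    show "\<forall>l. (\<forall>d\<in>{d. 0 \<le> d \<and> evtl J r (\<lambda>\<beta>. vabs (inf (vabs (xs \<beta> - x)) v - 0) \<le> d)}. l \<le> d) \<longrightarrow> l \<le> 0"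
    proof (intro allI impI)
      fix l assume lb: "\<forall>d\<in>{d. 0 \<le> d \<and> evtl J r (\<lambda>\<beta>. vabs (inf (vabs (xs \<beta> - x)) v - 0) \<le> d)}. l \<le> d"
      define m where "m = vpos l"
      have m0: "0 \<le> m" unfolding m_def by (rule vpos_ge0)
      have mlb: "m \<le> e" if "0 \<le> e" "evtl J r (\<lambda>\<beta>. vabs (inf (vabs (xs \<beta> - x)) v - 0) \<le> e)" for e
        using lb that unfolding m_def vpos_def by auto
      have "evtl J r (\<lambda>\<beta>. vabs (inf (vabs (xs \<beta> - x)) v - 0) \<le> v)"
        unfolding evtl_def using b0 \<open>\<And>\<beta>. vabs (inf (vabs (xs \<beta> - x)) v - 0) \<le> v\<close> by blast
      then have mv: "m \<le> v" using mlb v0 by blast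
      obtain D where DS: "\<forall>d\<in>D. d \<in> Srep SX" and D0: "\<forall>d\<in>D. sle (szero SX) d"
        and Dinf: "\<forall>w\<in>Srep SX. (\<forall>d\<in>D. sle w d) \<longrightarrow> sle w (szero SX)"
        and Dev: "\<forall>d\<in>D. evtl J r (\<lambda>\<beta>. sle (sabs (sminus (sinf (sabs (sminus (T (xs \<beta>)) (T x))) (T v)) (szero SX))) d)"
        using uoS_D[OF uo v0] by blast
      have "\<forall>d\<in>D. sle (T m) d"
        using part3_claim[OF v0 m0 mv _ _ _ mlb] DS D0 Dev by blast
      then have "sle (T m) (szero SX)" using Dinf T_Srep by blast
      then have "m \<le> 0" by (rule T_nonpos)
      then have "vpos l = 0" using m0 unfolding m_def by simp
      then show "l \<le> 0" using vpos_minus_vneg[of l] vneg_ge0[of l] by (metis diff_0 neg_le_0_iff_le)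
    qed
  qed
qed

end

theorem theorem3p4:
  fixes I :: "'i set"
    and B :: "'i \<Rightarrow> 'e::{ordered_real_vector,lattice} set"
    and u :: "'i \<Rightarrow> 'e"
    and X :: "'i \<Rightarrow> 'x topology"
    and Ta :: "'i \<Rightarrow> 'e \<Rightarrow> 'x srep"
    and T :: "'e \<Rightarrow> ('i \<times> 'x) srep"
  assumes arch: "archimedean_vl TYPE('e)"
    and bands: "\<forall>\<alpha>\<in>I. is_band (B \<alpha>)"
    and disj: "\<forall>\<alpha>\<in>I. \<forall>\<beta>\<in>I. \<alpha> \<noteq> \<beta> \<longrightarrow> (\<forall>a\<in>B \<alpha>. \<forall>b\<in>B \<beta>. vdisjoint a b)"
    and units: "\<forall>\<alpha>\<in>I. weak_unit_of (B \<alpha>) (u \<alpha>)"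
    and decomp: "\<forall>x. \<exists>y. band_decomp I B x y"
    and cpt: "\<forall>\<alpha>\<in>I. compact_space (X \<alpha>) \<and> Hausdorff_space (X \<alpha>)"
    and hom: "\<forall>\<alpha>\<in>I. inj_lattice_hom_S (B \<alpha>) (X \<alpha>) (Ta \<alpha>)"
    and unit1: "\<forall>\<alpha>\<in>I. sequiv (Ta \<alpha> (u \<alpha>)) (sone (X \<alpha>))"
    and dense: "\<forall>\<alpha>\<in>I. supnorm_closure_is_C (X \<alpha>) (Ta \<alpha>) (principal_ideal_in (B \<alpha>) (u \<alpha>))"
    and T_range: "\<forall>x. T x \<in> Srep (sum_topology X I)"
    and T_def: "\<forall>x y. band_decomp I B x y \<longrightarrow>
                  (\<forall>\<alpha>\<in>I. sequiv (sslice \<alpha> (T x)) (Ta \<alpha> (y \<alpha>)))"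
  shows "(\<forall>(J::'b set) r xs. directed_set J r \<longrightarrow> oconvE J r xs 0 \<longrightarrow>
             oconvS (sum_topology X I) J r (\<lambda>\<beta>. T (xs \<beta>)) (szero (sum_topology X I)))
       \<and> (\<forall>(J::'b set) r xs x. directed_set J r \<longrightarrow> uoconvE J r xs x \<longrightarrow>
             uoconvS (sum_topology X I) J r (\<lambda>\<beta>. T (xs \<beta>)) (T x))
       \<and> (\<forall>(J::'b set) r xs x. directed_set J r \<longrightarrow>
             uoconvS (sum_topology X I) J r (\<lambda>\<beta>. T (xs \<beta>)) (T x) \<longrightarrow> uoconvE J r xs x)"
proof -
  interpret W: wick I B u X Ta T
    using bands disj units decomp cpt hom unit1 dense T_range T_def by (simp add: wick_def)
  show ?thesis
  proof (intro conjI allI impI)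
    fix J :: "'b set" and r and xs :: "'b \<Rightarrow> 'e"
    assume "directed_set J r" "oconvE J r xs 0"
    then show "oconvS (sum_topology X I) J r (\<lambda>\<beta>. T (xs \<beta>)) (szero (sum_topology X I))"
      by (rule W.part1)
  next
    fix J :: "'b set" and r and xs :: "'b \<Rightarrow> 'e" and x
    assume "directed_set J r" "uoconvE J r xs x"
    then show "uoconvS (sum_topology X I) J r (\<lambda>\<beta>. T (xs \<beta>)) (T x)"
      by (rule W.part2)
  next
    fix J :: "'b set" and r and xs :: "'b \<Rightarrow> 'e" and x
    assume "directed_set J r" "uoconvS (sum_topology X I) J r (\<lambda>\<beta>. T (xs \<beta>)) (T x)"
    then show "uoconvE J r xs x"
      by (rule W.part3)
  qed
qed

end
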